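(* Let $n\ge 1$, $\alpha\ge 0$, and define $f_\alpha:\mathbb{R}^n\to\mathbb{R}$ by \[ f_\alpha(x)=\begin{cases}\|x\|^{1+\alpha}+\frac{\alpha-1}{2}, & \|x\|\le 1,\\ \frac{1+\alpha}{2}\|x\|^2, & \|x\|>1.\end{cases} \] Let $p\ge 1$. If $p<n$, then $f_\alpha\in W^{2,p}_{\mathrm{loc}}(\mathbb{R}^n)$ for every $\alpha\ge 0$; if $p\ge n$, then $f_\alpha\in W^{2,p}_{\mathrm{loc}}(\mathbb{R}^n)$ for every $\alpha>\frac{p-n}{p}$. Moreover, in these cases the distributional Hessian of $f_\alpha$ coincides with its pointwise Hessian, which is given (for $\|x\|\notin\{0,1\}$) by \[ Hf_\alpha(x)=\begin{cases}(1+\alpha)\left(\|x\|^{\alpha-1}\mathrm{Id}_n+(\alpha-1)\|x\|^{\alpha-3}x\otimes x\right), & 0<\|x\|<1,\\ (1+\alpha)\mathrm{Id}_n, & \|x\|>1.\end{cases} \]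
   Context: $\|\cdot\|$ is the Euclidean norm on $\mathbb{R}^n$, and $x\otimes x$ is the matrix with entries $x_ix_j$. *)

theory Defs
  imports "HOL-Analysis.Analysis"
begin

definition cpartial :: "'n::finite \<Rightarrow> (real^'n \<Rightarrow> real) \<Rightarrow> real^'n \<Rightarrow> real" where
  "cpartial i g x = frechet_derivative g (at x) (axis i 1)"

inductive_set iter_partials :: "(real^'n::finite \<Rightarrow> real) \<Rightarrow> (real^'n \<Rightarrow> real) set"
  for \<phi> where
  base: "\<phi> \<in> iter_partials \<phi>"
| step: "g \<in> iter_partials \<phi> \<Longrightarrow> cpartial i g \<in> iter_partials \<phi>"

definition test_fn :: "(real^'n::finite \<Rightarrow> real) \<Rightarrow> bool" where
  "test_fn \<phi> \<longleftrightarrow> (\<forall>g\<in>iter_partials \<phi>. \<forall>x. g differentiable (at x))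
      \<and> (\<exists>K. compact K \<and> (\<forall>x. x \<notin> K \<longrightarrow> \<phi> x = 0))"

definition locally_Lp :: "real \<Rightarrow> (real^'n::finite \<Rightarrow> real) \<Rightarrow> bool" where
  "locally_Lp p f \<longleftrightarrow> f \<in> borel_measurable lborel \<and>
      (\<forall>K. compact K \<longrightarrow> set_integrable lborel K (\<lambda>x. \<bar>f x\<bar> powr p))"

definition weak_partial :: "'n::finite \<Rightarrow> (real^'n \<Rightarrow> real) \<Rightarrow> (real^'n \<Rightarrow> real) \<Rightarrow> bool" where
  "weak_partial i f g \<longleftrightarrow> (\<forall>\<phi>. test_fn \<phi> \<longrightarrow>
      (\<integral>x. f x * cpartial i \<phi> x \<partial>lborel) = - (\<integral>x. g x * \<phi> x \<partial>lborel))"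

definition weak_second :: "'n::finite \<Rightarrow> 'n \<Rightarrow> (real^'n \<Rightarrow> real) \<Rightarrow> (real^'n \<Rightarrow> real) \<Rightarrow> bool" where
  "weak_second i j f h \<longleftrightarrow> (\<forall>\<phi>. test_fn \<phi> \<longrightarrow>
      (\<integral>x. f x * cpartial i (cpartial j \<phi>) x \<partial>lborel) = (\<integral>x. h x * \<phi> x \<partial>lborel))"

definition W2p_loc :: "real \<Rightarrow> (real^'n::finite \<Rightarrow> real) \<Rightarrow> bool" where
  "W2p_loc p f \<longleftrightarrow> locally_Lp p f \<and>
     (\<exists>g :: 'n \<Rightarrow> real^'n \<Rightarrow> real. \<exists>H :: 'n \<Rightarrow> 'n \<Rightarrow> real^'n \<Rightarrow> real.
        (\<forall>i. locally_Lp p (g i) \<and> weak_partial i f (g i)) \<and>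
        (\<forall>i j. locally_Lp p (H i j) \<and> weak_partial j (g i) (H i j)))"

definition f_alpha :: "real \<Rightarrow> real^'n::finite \<Rightarrow> real" where
  "f_alpha \<alpha> x = (if norm x \<le> 1 then norm x powr (1 + \<alpha>) + (\<alpha> - 1) / 2
                   else (1 + \<alpha>) / 2 * (norm x)\<^sup>2)"

definition hess_alpha :: "real \<Rightarrow> 'n::finite \<Rightarrow> 'n \<Rightarrow> real^'n \<Rightarrow> real" where
  "hess_alpha \<alpha> i j x = (if norm x < 1
      then (1 + \<alpha>) * (norm x powr (\<alpha> - 1) * (if i = j then 1 else 0)
                        + (\<alpha> - 1) * norm x powr (\<alpha> - 3) * (x $ i * x $ j))
      else (1 + \<alpha>) * (if i = j then 1 else 0))"

end

theory Submission
  imports Defs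
begin

definition dclosed :: "(real \<Rightarrow> real) set \<Rightarrow> bool" where
  "dclosed S \<longleftrightarrow> (\<forall>g\<in>S. \<exists>g'\<in>S. \<forall>x. (g has_real_derivative g' x) (at x))"

definition smooth1 :: "(real \<Rightarrow> real) \<Rightarrow> bool" where
  "smooth1 f \<longleftrightarrow> (\<exists>S. dclosed S \<and> f \<in> S)"

lemma smooth1_deriv:
  assumes "smooth1 f"
  shows "smooth1 (deriv f)" "\<And>x. (f has_real_derivative deriv f x) (at x)"
proof -
  obtain S where S: "dclosed S" "f \<in> S" using assms smooth1_def by blast
  then obtain g' where g': "g' \<in> S" "\<And>x. (f has_real_derivative g' x) (at x)"
    unfolding dclosed_def by blast
  have "deriv f = g'" using g'(2) DERIV_imp_deriv by blast
  then show "smooth1 (deriv f)" using S g' smooth1_def by auto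
  show "\<And>x. (f has_real_derivative deriv f x) (at x)" using g'(2) \<open>deriv f = g'\<close> by simp
qed

lemma smooth1_affine:
  assumes "smooth1 f"
  shows "smooth1 (\<lambda>t. f (c * t + b))"
proof -
  obtain S where S: "dclosed S" "f \<in> S" using assms smooth1_def by blast
  define S' where "S' = {h. \<exists>k g. g \<in> S \<and> h = (\<lambda>t. k * g (c * t + b))}"
  have "dclosed S'"
    unfolding dclosed_def
  proof
    fix h assume "h \<in> S'"
    then obtain k g where kg: "g \<in> S" "h = (\<lambda>t. k * g (c * t + b))" using S'_def by blast
    then obtain g' where g': "g' \<in> S" "\<And>x. (g has_real_derivative g' x) (at x)"
      using S(1) unfolding dclosed_def by blast
    have "\<forall>x. (h has_real_derivative (k * c) * g' (c * x + b)) (at x)"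
    proof
      fix x
      have "((\<lambda>t. c * t + b) has_real_derivative c) (at x)"
        by (auto intro!: derivative_eq_intros)
      from DERIV_chain2[OF g'(2) this]
      have "((\<lambda>t. g (c * t + b)) has_real_derivative g' (c * x + b) * c) (at x)" .
      then have "((\<lambda>t. k * g (c * t + b)) has_real_derivative k * (g' (c * x + b) * c)) (at x)"
        by (rule DERIV_cmult)
      then show "(h has_real_derivative (k * c) * g' (c * x + b)) (at x)"
        using kg by (simp add: algebra_simps)
    qed
    moreover have "(\<lambda>x. (k * c) * g' (c * x + b)) \<in> S'" using g'(1) S'_def by blast
    ultimately show "\<exists>g'\<in>S'. \<forall>x. (h has_real_derivative g' x) (at x)"
      by (intro bexI[of _ "\<lambda>x. (k * c) * g' (c * x + b)"]) auto
  qed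
  moreover have "(\<lambda>t. f (c * t + b)) \<in> S'" using S(2) unfolding S'_def
    by (rule_tac CollectI, rule_tac x=1 in exI, auto)
  ultimately show ?thesis using smooth1_def by blast
qed

lemma smooth1_mult:
  assumes "smooth1 f" "smooth1 g"
  shows "smooth1 (\<lambda>t. f t * g t)"
proof -
  obtain Sf where Sf: "dclosed Sf" "f \<in> Sf" using assms smooth1_def by blast
  obtain Sg where Sg: "dclosed Sg" "g \<in> Sg" using assms smooth1_def by blast
  obtain df where df: "\<And>a. a \<in> Sf \<Longrightarrow> df a \<in> Sf \<and> (\<forall>x. (a has_real_derivative df a x) (at x))"
    using Sf(1) unfolding dclosed_def by metis
  obtain dg where dg: "\<And>a. a \<in> Sg \<Longrightarrow> dg a \<in> Sg \<and> (\<forall>x. (a has_real_derivative dg a x) (at x))"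
    using Sg(1) unfolding dclosed_def by metis
  define F where "F L = (\<lambda>x. \<Sum>(a,b)\<leftarrow>L. a x * b x)" for L :: "((real\<Rightarrow>real) \<times> (real\<Rightarrow>real)) list"
  define S where "S = {h. \<exists>L. set L \<subseteq> Sf \<times> Sg \<and> h = F L}"
  define D where "D L = concat (map (\<lambda>(a,b). [(df a, b), (a, dg b)]) L)" for L
  have Dset: "set L \<subseteq> Sf \<times> Sg \<Longrightarrow> set (D L) \<subseteq> Sf \<times> Sg" for L
    unfolding D_def using df dg by (induction L) auto
  have Dder: "set L \<subseteq> Sf \<times> Sg \<Longrightarrow> (F L has_real_derivative F (D L) x) (at x)" for L x
  proof (induction L)
    case Nil
    then show ?case by (simp add: F_def D_def)
  next
    case (Cons p L)
    obtain a b where p: "p = (a, b)" by (cases p)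
    have ab: "a \<in> Sf" "b \<in> Sg" using Cons.prems p by auto
    have IH: "(F L has_real_derivative F (D L) x) (at x)" using Cons by auto
    have da: "(a has_real_derivative df a x) (at x)" using df ab by blast
    have db: "(b has_real_derivative dg b x) (at x)" using dg ab by blast
    have "F (p # L) = (\<lambda>x. a x * b x + F L x)" by (simp add: F_def p)
    moreover have "F (D (p # L)) x = df a x * b x + a x * dg b x + F (D L) x"
      by (simp add: F_def D_def p)
    moreover have "((\<lambda>x. a x * b x + F L x) has_real_derivative
        df a x * b x + a x * dg b x + F (D L) x) (at x)"
      using DERIV_add[OF DERIV_mult[OF da db] IH] by (simp add: algebra_simps)
    ultimately show ?case by simp
  qed
  have "dclosed S"
    unfolding dclosed_def
  proof
    fix h assume "h \<in> S"
    then obtain L where L: "set L \<subseteq> Sf \<times> Sg" "h = F L" unfolding S_def by blast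
    have "F (D L) \<in> S" unfolding S_def using Dset[OF L(1)] by blast
    moreover have "\<forall>x. (h has_real_derivative F (D L) x) (at x)" using Dder[OF L(1)] L(2) by simp
    ultimately show "\<exists>g'\<in>S. \<forall>x. (h has_real_derivative g' x) (at x)" by blast
  qed
  moreover have "(\<lambda>t. f t * g t) \<in> S"
    unfolding S_def using Sf Sg by (intro CollectI exI[of _ "[(f,g)]"]) (auto simp: F_def)
  ultimately show ?thesis using smooth1_def by blast
qed

definition Eb :: "real \<Rightarrow> real" where
  "Eb s = (if 0 < s then exp (- inverse s) else 0)"

lemma poly_exp_lim: "((\<lambda>t::real. poly P t / exp t) \<longlongrightarrow> 0) at_top"
proof -
  have "((\<lambda>t. \<Sum>i\<le>degree P. coeff P i * (t ^ i / exp t)) \<longlongrightarrow> (\<Sum>i\<le>degree P. coeff P i * 0)) at_top"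
    by (intro tendsto_sum tendsto_mult tendsto_const tendsto_power_div_exp_0)
  then show ?thesis by (simp add: poly_altdef sum_divide_distrib)
qed

lemma poly_exp_lim0: "((\<lambda>h::real. poly P (inverse h) * exp (- inverse h)) \<longlongrightarrow> 0) (at_right 0)"
proof -
  have "(((\<lambda>t::real. poly P t / exp t) \<circ> inverse) \<longlongrightarrow> 0) (at_right (0::real))"
    using filterlim_compose[OF poly_exp_lim filterlim_inverse_at_top_right] by (simp add: o_def)
  then show ?thesis by (simp add: o_def exp_minus field_simps)
qed

definition EP :: "real poly \<Rightarrow> real \<Rightarrow> real" where
  "EP P s = (if 0 < s then poly P (inverse s) * exp (- inverse s) else 0)"

lemma EP_deriv: "(EP P has_real_derivative EP ([:0,0,1:] * (P - pderiv P)) x) (at x)"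
proof -
  consider "x < 0" | "x = 0" | "x > 0" by linarith
  then show ?thesis
  proof cases
    case 1
    have "((\<lambda>_. 0) has_real_derivative 0) (at x)" by simp
    then have "(EP P has_real_derivative 0) (at x)"
      by (rule has_field_derivative_transform_within_open[where S="{..<0}"])
        (use 1 in \<open>auto simp: EP_def\<close>)
    then show ?thesis using 1 by (simp add: EP_def)
  next
    case 2
    have "((\<lambda>h. (EP P h - EP P 0) / h) \<longlongrightarrow> 0) (at 0)"
      unfolding filterlim_at_split
    proof
      show "((\<lambda>h. (EP P h - EP P 0) / h) \<longlongrightarrow> 0) (at_left 0)"
        by (rule tendsto_eventually) (unfold eventually_at_left_field, rule exI[of _ "-1"], simp add: EP_def)
      have "((\<lambda>h. poly ([:0,1:] * P) (inverse h) * exp (- inverse h)) \<longlongrightarrow> 0) (at_right 0)"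
        by (rule poly_exp_lim0)
      moreover have "eventually (\<lambda>h. poly ([:0,1:] * P) (inverse h) * exp (- inverse h) = (EP P h - EP P 0) / h) (at_right 0)"
        unfolding eventually_at_right_field
      proof (intro exI[of _ 1] conjI allI impI)
        fix h :: real assume "0 < h"
        then show "poly ([:0,1:] * P) (inverse h) * exp (- inverse h) = (EP P h - EP P 0) / h"
          by (simp add: EP_def poly_mult divide_inverse)
      qed simp
      ultimately show "((\<lambda>h. (EP P h - EP P 0) / h) \<longlongrightarrow> 0) (at_right 0)"
        by (rule Lim_transform_eventually)
    qed
    then have "(EP P has_real_derivative 0) (at 0)"
      by (simp add: DERIV_def)
    then show ?thesis using 2 by (simp add: EP_def)
  next
    case 3
    have d: "((\<lambda>s. poly P (inverse s) * exp (- inverse s)) has_real_derivative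
       (poly (pderiv P) (inverse x) * (- ((inverse x)^2))) * exp (- inverse x) + poly P (inverse x) * (exp (- inverse x) * (inverse x)^2)) (at x)"
    proof -
      have i: "(inverse has_real_derivative - ((inverse x)^2)) (at x)"
        using 3 DERIV_inverse[of x] by (simp add: power2_eq_square)
      have p: "((\<lambda>s. poly P (inverse s)) has_real_derivative poly (pderiv P) (inverse x) * (- ((inverse x)^2))) (at x)"
        using DERIV_chain2[OF poly_DERIV i] .
      have e: "((\<lambda>s. exp (- inverse s)) has_real_derivative exp (- inverse x) * (inverse x)^2) (at x)"
        using DERIV_chain2[OF DERIV_exp DERIV_minus[OF i]] by simp
      show ?thesis using DERIV_mult[OF p e] by (simp add: mult_ac)
    qed
    have "(EP P has_real_derivative
       (poly (pderiv P) (inverse x) * (- ((inverse x)^2))) * exp (- inverse x) + poly P (inverse x) * (exp (- inverse x) * (inverse x)^2)) (at x)"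
      by (rule has_field_derivative_transform_within_open[OF d, where S="{0<..}"])
        (use 3 in \<open>auto simp: EP_def\<close>)
    moreover have "EP ([:0,0,1:] * (P - pderiv P)) x = (poly (pderiv P) (inverse x) * (- ((inverse x)^2))) * exp (- inverse x) + poly P (inverse x) * (exp (- inverse x) * (inverse x)^2)"
      using 3 by (simp add: EP_def poly_mult poly_diff algebra_simps) (simp add: power2_eq_square mult_ac add_ac)
    ultimately show ?thesis by simp
  qed
qed

lemma smooth1_Eb: "smooth1 Eb"
proof -
  have "dclosed (range EP)"
    unfolding dclosed_def
  proof
    fix g assume "g \<in> range EP"
    then obtain P where "g = EP P" by blast
    then show "\<exists>g'\<in>range EP. \<forall>x. (g has_real_derivative g' x) (at x)"
      using EP_deriv by blast
  qed
  moreover have "Eb = EP 1" by (auto simp: Eb_def EP_def fun_eq_iff)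
  ultimately show ?thesis unfolding smooth1_def by blast
qed

definition prodfn :: "('n::finite \<Rightarrow> real \<Rightarrow> real) \<Rightarrow> real^'n \<Rightarrow> real" where
  "prodfn \<gamma> x = (\<Prod>k\<in>UNIV. \<gamma> k (x $ k))"

lemma prodfn_has_derivative:
  fixes \<gamma> :: "'n::finite \<Rightarrow> real \<Rightarrow> real"
  assumes "\<forall>k. smooth1 (\<gamma> k)"
  shows "(prodfn \<gamma> has_derivative
     (\<lambda>h. \<Sum>i\<in>UNIV. (deriv (\<gamma> i) (x$i) * h$i) * (\<Prod>j\<in>UNIV-{i}. \<gamma> j (x$j)))) (at x)"
proof -
  have "((\<lambda>y. \<gamma> i (y$i)) has_derivative (\<lambda>h. deriv (\<gamma> i) (x$i) * h$i)) (at x)" for i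
  proof -
    have "(\<gamma> i has_real_derivative deriv (\<gamma> i) (x$i)) (at (x$i))"
      using smooth1_deriv assms by blast
    then have d: "(\<gamma> i has_derivative (\<lambda>t. deriv (\<gamma> i) (x$i) * t)) (at (x$i))"
      by (simp add: has_field_derivative_def)
    have l: "((\<lambda>y::real^'n. y$i) has_derivative (\<lambda>h. h$i)) (at x)"
      by (rule bounded_linear_imp_has_derivative) (rule bounded_linear_vec_nth)
    from diff_chain_at[OF l d] show ?thesis by (simp add: o_def)
  qed
  then show ?thesis unfolding prodfn_def by (rule has_derivative_prod)
qed

lemma prodfn_differentiable:
  assumes "\<forall>k. smooth1 (\<gamma> k)"
  shows "prodfn \<gamma> differentiable (at x)"
  using prodfn_has_derivative[OF assms] differentiable_def by blast

lemma cpartial_prodfn: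
  assumes "\<forall>k. smooth1 (\<gamma> k)"
  shows "cpartial i (prodfn \<gamma>) = prodfn (\<gamma>(i := deriv (\<gamma> i)))"
proof
  fix x :: "real^'a"
  have "cpartial i (prodfn \<gamma>) x =
      (\<Sum>k\<in>UNIV. (deriv (\<gamma> k) (x$k) * (axis i 1 :: real^'a)$k) * (\<Prod>j\<in>UNIV-{k}. \<gamma> j (x$j)))"
    unfolding cpartial_def using frechet_derivative_at[OF prodfn_has_derivative[OF assms, of x], symmetric]
    by simp
  also have "\<dots> = (\<Sum>k\<in>UNIV. if k = i then deriv (\<gamma> i) (x$i) * (\<Prod>j\<in>UNIV-{i}. \<gamma> j (x$j)) else 0)"
    by (rule sum.cong) (auto simp: axis_def)
  also have "\<dots> = deriv (\<gamma> i) (x$i) * (\<Prod>j\<in>UNIV-{i}. \<gamma> j (x$j))"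
    by simp
  also have "\<dots> = prodfn (\<gamma>(i := deriv (\<gamma> i))) x"
    unfolding prodfn_def
    by (subst prod.remove[of UNIV i]) (auto intro!: prod.cong)
  finally show "cpartial i (prodfn \<gamma>) x = prodfn (\<gamma>(i := deriv (\<gamma> i))) x" .
qed

lemma iter_partials_prodfn:
  assumes "g \<in> iter_partials \<phi>" "\<phi> = prodfn \<gamma>" "\<forall>k. smooth1 (\<gamma> k)"
  shows "\<exists>\<gamma>'. (\<forall>k. smooth1 (\<gamma>' k)) \<and> g = prodfn \<gamma>'"
  using assms(1)
proof (induction rule: iter_partials.induct)
  case base
  then show ?case using assms by blast
next
  case (step g i)
  then obtain \<gamma>' where g: "\<forall>k. smooth1 (\<gamma>' k)" "g = prodfn \<gamma>'" by blast
  then have "cpartial i g = prodfn (\<gamma>'(i := deriv (\<gamma>' i)))"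
    using cpartial_prodfn by blast
  moreover have "\<forall>k. smooth1 ((\<gamma>'(i := deriv (\<gamma>' i))) k)"
    using g(1) smooth1_deriv(1) by auto
  ultimately show ?case by blast
qed

lemma test_fn_prodfn:
  fixes l u :: "real^'n::finite"
  assumes "\<forall>k. smooth1 (\<gamma> k)" "\<And>k t. t < l$k \<or> t > u$k \<Longrightarrow> \<gamma> k t = 0"
  shows "test_fn (prodfn \<gamma>)"
  unfolding test_fn_def
proof safe
  fix g x assume "g \<in> iter_partials (prodfn \<gamma>)"
  then obtain \<gamma>' where "\<forall>k. smooth1 (\<gamma>' k)" "g = prodfn \<gamma>'"
    using iter_partials_prodfn assms(1) by blast
  then show "g differentiable (at x)" using prodfn_differentiable by blast
next
  have "\<forall>x. x \<notin> cbox l u \<longrightarrow> prodfn \<gamma> x = 0"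
  proof safe
    fix x assume "x \<notin> cbox l u"
    then have "\<exists>k. x$k < l$k \<or> x$k > u$k" unfolding mem_box_cart by (meson not_le)
    then obtain k where "x$k < l$k \<or> x$k > u$k" by blast
    then have "\<gamma> k (x$k) = 0" using assms(2) by blast
    then show "prodfn \<gamma> x = 0" unfolding prodfn_def
      by (intro prod_zero) auto
  qed
  then show "\<exists>K. compact K \<and> (\<forall>x. x \<notin> K \<longrightarrow> prodfn \<gamma> x = 0)"
    by (intro exI[of _ "cbox l u"]) auto
qed

lemma iter_partials_trans:
  assumes "g \<in> iter_partials \<psi>" "\<psi> \<in> iter_partials \<phi>"
  shows "g \<in> iter_partials \<phi>"
  using assms by (induction rule: iter_partials.induct) (auto intro: iter_partials.step)

lemma test_fn_differentiable:
  assumes "test_fn \<phi>" "g \<in> iter_partials \<phi>"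
  shows "g differentiable (at x)"
  using assms unfolding test_fn_def by blast

lemma test_fn_cont:
  assumes "test_fn \<phi>"
  shows "continuous_on UNIV \<phi>" "continuous_on UNIV (cpartial i \<phi>)"
proof -
  have "\<phi> differentiable (at x)" for x
    using test_fn_differentiable[OF assms iter_partials.base] .
  then show "continuous_on UNIV \<phi>"
    by (simp add: differentiable_imp_continuous_on differentiable_on_def)
  have "cpartial i \<phi> differentiable (at x)" for x
    using test_fn_differentiable[OF assms iter_partials.step[OF iter_partials.base]] .
  then show "continuous_on UNIV (cpartial i \<phi>)"
    by (simp add: differentiable_imp_continuous_on differentiable_on_def)
qed

lemma test_fn_supp:
  assumes "test_fn \<phi>"
  obtains K where "compact K" "\<And>x. x \<notin> K \<Longrightarrow> \<phi> x = 0" "\<And>x i. x \<notin> K \<Longrightarrow> cpartial i \<phi> x = 0"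
proof -
  obtain K where K: "compact K" "\<And>x. x \<notin> K \<Longrightarrow> \<phi> x = 0" using assms unfolding test_fn_def by blast
  have "cpartial i \<phi> x = 0" if "x \<notin> K" for x i
  proof -
    have "((\<lambda>_. 0) has_derivative (\<lambda>_. 0)) (at x)" by simp
    then have "(\<phi> has_derivative (\<lambda>_. 0)) (at x)"
      by (rule has_derivative_transform_within_open[where s="- K"])
        (use K that compact_imp_closed in auto)
    then show ?thesis unfolding cpartial_def using frechet_derivative_at by metis
  qed
  then show ?thesis using K that by blast
qed

lemma test_fn_cpartial:
  assumes "test_fn \<phi>"
  shows "test_fn (cpartial i \<phi>)"
  unfolding test_fn_def
proof safe
  fix g x assume "g \<in> iter_partials (cpartial i \<phi>)"
  then have "g \<in> iter_partials \<phi>"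
    using iter_partials_trans iter_partials.step[OF iter_partials.base] by blast
  then show "g differentiable (at x)" using test_fn_differentiable[OF assms] by blast
next
  obtain K where "compact K" "\<And>x i. x \<notin> K \<Longrightarrow> cpartial i \<phi> x = 0"
    using test_fn_supp[OF assms] by metis
  then show "\<exists>K. compact K \<and> (\<forall>x. x \<notin> K \<longrightarrow> cpartial i \<phi> x = 0)" by blast
qed

lemma cont_supp_bounded:
  fixes \<phi> :: "'a::euclidean_space \<Rightarrow> real"
  assumes "continuous_on UNIV \<phi>" "compact K" "\<And>x. x \<notin> K \<Longrightarrow> \<phi> x = 0"
  shows "\<exists>B. \<forall>x. \<bar>\<phi> x\<bar> \<le> B"
proof -
  have "compact (\<phi> ` K)"
    using assms(1,2) compact_continuous_image continuous_on_subset by blast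
  then obtain B where B: "\<And>y. y \<in> \<phi> ` K \<Longrightarrow> norm y \<le> B"
    using compact_imp_bounded bounded_iff by metis
  have "\<bar>\<phi> x\<bar> \<le> max B 0" for x
    using B[of "\<phi> x"] assms(3)[of x] by (cases "x \<in> K") auto
  then show ?thesis by blast
qed

lemma locally_L1_integrable_mult:
  fixes F \<psi> :: "real^'n::finite \<Rightarrow> real"
  assumes F: "F \<in> borel_measurable lborel" "\<And>K. compact K \<Longrightarrow> set_integrable lborel K F"
    and \<psi>: "continuous_on UNIV \<psi>" "compact K" "\<And>x. x \<notin> K \<Longrightarrow> \<psi> x = 0"
  shows "integrable lborel (\<lambda>x. F x * \<psi> x)"
proof -
  obtain B where B: "\<And>x. \<bar>\<psi> x\<bar> \<le> B" using cont_supp_bounded[OF \<psi>] by blast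
  have "integrable lborel (\<lambda>x. B * (indicator K x *\<^sub>R F x))"
    using F(2)[OF \<psi>(2)] unfolding set_integrable_def by simp
  moreover have "\<psi> \<in> borel_measurable lborel"
    using \<psi>(1) borel_measurable_continuous_onI by simp
  then have "(\<lambda>x. F x * \<psi> x) \<in> borel_measurable lborel" using F(1) by measurable
  moreover have "AE x in lborel. norm (F x * \<psi> x) \<le> norm (B * (indicator K x *\<^sub>R F x))"
  proof (rule AE_I2)
    fix x
    show "norm (F x * \<psi> x) \<le> norm (B * (indicator K x *\<^sub>R F x))"
    proof (cases "x \<in> K")
      case True
      have "\<bar>F x\<bar> * \<bar>\<psi> x\<bar> \<le> \<bar>F x\<bar> * B" using B[of x] by (intro mult_left_mono) auto
      moreover have "0 \<le> B" using B[of x] by linarith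
      ultimately show ?thesis using True by (simp add: abs_mult mult.commute)
    next
      case False
      then show ?thesis using \<psi>(3) by simp
    qed
  qed
  ultimately show ?thesis by (rule Bochner_Integration.integrable_bound)
qed

lemma locally_Lp_1_D:
  assumes "locally_Lp 1 F"
  shows "F \<in> borel_measurable lborel" "\<And>K. compact K \<Longrightarrow> set_integrable lborel K F"
proof -
  show m: "F \<in> borel_measurable lborel" using assms locally_Lp_def by blast
  fix K :: "(real^'a) set" assume "compact K"
  then have "set_integrable lborel K (\<lambda>x. \<bar>F x\<bar>)" using assms unfolding locally_Lp_def
    by (simp add: powr_one')
  moreover have "K \<in> sets lborel" using \<open>compact K\<close> by (simp add: borel_compact)
  ultimately show "set_integrable lborel K F"
    using set_integrable_abs_iff'[OF m] by blast
qed

lemma test_fn_integrable: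
  assumes "test_fn \<phi>" "locally_Lp 1 F"
  shows "integrable lborel (\<lambda>x. F x * \<phi> x)" "integrable lborel (\<lambda>x. F x * cpartial i \<phi> x)"
proof -
  obtain K where K: "compact K" "\<And>x. x \<notin> K \<Longrightarrow> \<phi> x = 0" "\<And>x i. x \<notin> K \<Longrightarrow> cpartial i \<phi> x = 0"
    using test_fn_supp[OF assms(1)] by metis
  show "integrable lborel (\<lambda>x. F x * \<phi> x)"
    using locally_L1_integrable_mult[OF locally_Lp_1_D[OF assms(2)] test_fn_cont(1)[OF assms(1)] K(1,2)] by blast
  show "integrable lborel (\<lambda>x. F x * cpartial i \<phi> x)"
    using locally_L1_integrable_mult[OF locally_Lp_1_D[OF assms(2)] test_fn_cont(2)[OF assms(1)] K(1,3)] by blast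
qed

definition bump1 :: "real \<Rightarrow> real \<Rightarrow> nat \<Rightarrow> real \<Rightarrow> real" where
  "bump1 l u m t = Eb ((real m + 1) * (t - l)) * Eb ((real m + 1) * (u - t))"

lemma smooth1_bump1: "smooth1 (bump1 l u m)"
proof -
  have "smooth1 (\<lambda>t. (\<lambda>t. Eb ((real m + 1) * t + (- (real m + 1) * l))) t *
                     (\<lambda>t. Eb ((- (real m + 1)) * t + ((real m + 1) * u))) t)"
    by (intro smooth1_mult smooth1_affine smooth1_Eb)
  moreover have "bump1 l u m = (\<lambda>t. (\<lambda>t. Eb ((real m + 1) * t + (- (real m + 1) * l))) t *
                     (\<lambda>t. Eb ((- (real m + 1)) * t + ((real m + 1) * u))) t)"
    by (auto simp: bump1_def algebra_simps fun_eq_iff)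
  ultimately show ?thesis by simp
qed

lemma Eb_nonneg: "0 \<le> Eb s" and Eb_le1: "Eb s \<le> 1"
  by (auto simp: Eb_def)

lemma bump1_nonneg: "0 \<le> bump1 l u m t" and bump1_le1: "bump1 l u m t \<le> 1"
  unfolding bump1_def using Eb_nonneg Eb_le1
  by (auto intro: mult_nonneg_nonneg mult_le_one)

lemma bump1_zero: "t < l \<or> t > u \<Longrightarrow> bump1 l u m t = 0"
  by (auto simp: bump1_def Eb_def mult_pos_pos zero_less_mult_iff)

lemma Eb_lim: assumes "0 < a" shows "(\<lambda>m. Eb ((real m + 1) * a)) \<longlonglongrightarrow> 1"
proof -
  have "(\<lambda>m. inverse (real (Suc m)) * inverse a) \<longlonglongrightarrow> 0 * inverse a"
    by (intro tendsto_mult LIMSEQ_inverse_real_of_nat tendsto_const)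
  then have "(\<lambda>m. exp (- (inverse (real (Suc m)) * inverse a))) \<longlonglongrightarrow> exp (- (0 * inverse a))"
    by (intro tendsto_exp tendsto_minus)
  moreover have "Eb ((real m + 1) * a) = exp (- (inverse (real (Suc m)) * inverse a))" for m
    using assms by (simp add: Eb_def mult_pos_pos add_pos_nonneg)
  ultimately show ?thesis by simp
qed

lemma bump1_lim: "(\<lambda>m. bump1 l u m t) \<longlonglongrightarrow> indicator {l<..<u} t"
proof (cases "l < t \<and> t < u")
  case True
  have "(\<lambda>m. Eb ((real m + 1) * (t - l)) * Eb ((real m + 1) * (u - t))) \<longlonglongrightarrow> 1 * 1"
    using True by (intro tendsto_mult Eb_lim) auto
  then show ?thesis using True by (simp add: bump1_def)
next
  case False
  then have "bump1 l u m t = 0" for m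
    by (auto simp: bump1_def Eb_def zero_less_mult_iff)
  then show ?thesis using False by simp
qed

definition bumpn :: "real^'n::finite \<Rightarrow> real^'n \<Rightarrow> nat \<Rightarrow> real^'n \<Rightarrow> real" where
  "bumpn l u m = prodfn (\<lambda>k. bump1 (l$k) (u$k) m)"

lemma test_fn_bumpn: "test_fn (bumpn l u m)"
  unfolding bumpn_def
  by (rule test_fn_prodfn[where l=l and u=u]) (auto simp: smooth1_bump1 bump1_zero)

lemma bumpn_bounds: "0 \<le> bumpn l u m x" "bumpn l u m x \<le> 1"
  unfolding bumpn_def prodfn_def
  by (auto intro!: prod_nonneg prod_le_1 simp: bump1_nonneg bump1_le1)

lemma bumpn_zero: "x \<notin> cbox l u \<Longrightarrow> bumpn l u m x = 0"
proof -
  assume "x \<notin> cbox l u"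
  then have "\<exists>k. x$k < l$k \<or> x$k > u$k" unfolding mem_box_cart by (meson not_le)
  then obtain k where "x$k < l$k \<or> x$k > u$k" by blast
  then show ?thesis unfolding bumpn_def prodfn_def
    by (intro prod_zero) (auto intro!: bexI[of _ k] bump1_zero)
qed

lemma bumpn_lim: "(\<lambda>m. bumpn l u m x) \<longlonglongrightarrow> indicator (box l u) x"
proof -
  have "(\<lambda>m. \<Prod>k\<in>UNIV. bump1 (l$k) (u$k) m (x$k)) \<longlonglongrightarrow> (\<Prod>k\<in>UNIV. indicator {l$k<..<u$k} (x$k))"
    by (intro tendsto_prod bump1_lim)
  moreover have "(\<Prod>k\<in>UNIV. indicator {l$k<..<u$k} (x$k) :: real) = indicator (box l u) x"
  proof (cases "x \<in> box l u")
    case True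
    then show ?thesis by (simp add: mem_box_cart indicator_def)
  next
    case False
    then obtain k where "\<not> (l$k < x$k \<and> x$k < u$k)" unfolding mem_box_cart by blast
    then have "indicator {l$k<..<u$k} (x$k) = (0::real)" by (auto simp: indicator_def)
    then show ?thesis using False by (auto intro!: prod_zero)
  qed
  ultimately show ?thesis unfolding bumpn_def prodfn_def by simp
qed

lemma box_integral_zero:
  fixes d :: "real^'n::finite \<Rightarrow> real"
  assumes d: "d \<in> borel_measurable lborel" "\<And>K. compact K \<Longrightarrow> set_integrable lborel K d"
    and T: "\<And>\<phi>. test_fn \<phi> \<Longrightarrow> (\<integral>x. d x * \<phi> x \<partial>lborel) = 0"
  shows "(LINT x:box l u|lborel. d x) = 0"
proof -
  have cb: "integrable lborel (\<lambda>x. indicator (cbox l u) x *\<^sub>R d x)"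
    using d(2)[OF compact_cbox] unfolding set_integrable_def .
  have meas: "bumpn l u m \<in> borel_measurable lborel" for m
    using borel_measurable_continuous_onI[OF test_fn_cont(1)[OF test_fn_bumpn]] by simp
  have "(\<lambda>m. \<integral>x. d x * bumpn l u m x \<partial>lborel) \<longlonglongrightarrow> (\<integral>x. indicator (box l u) x *\<^sub>R d x \<partial>lborel)"
  proof (rule integral_dominated_convergence[where w="\<lambda>x. norm (indicator (cbox l u) x *\<^sub>R d x)"])
    show "(\<lambda>x. indicator (box l u) x *\<^sub>R d x) \<in> borel_measurable lborel" using d(1) by measurable
    show "(\<lambda>x. d x * bumpn l u m x) \<in> borel_measurable lborel" for m using d(1) meas by measurable
    show "integrable lborel (\<lambda>x. norm (indicator (cbox l u) x *\<^sub>R d x))" using cb by simp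
    show "AE x in lborel. (\<lambda>m. d x * bumpn l u m x) \<longlonglongrightarrow> indicator (box l u) x *\<^sub>R d x"
    proof (rule AE_I2)
      fix x
      have "(\<lambda>m. d x * bumpn l u m x) \<longlonglongrightarrow> d x * indicator (box l u) x"
        by (intro tendsto_mult tendsto_const bumpn_lim)
      then show "(\<lambda>m. d x * bumpn l u m x) \<longlonglongrightarrow> indicator (box l u) x *\<^sub>R d x"
        by (simp add: mult.commute)
    qed
    show "AE x in lborel. norm (d x * bumpn l u m x) \<le> norm (indicator (cbox l u) x *\<^sub>R d x)" for m
    proof (rule AE_I2)
      fix x
      show "norm (d x * bumpn l u m x) \<le> norm (indicator (cbox l u) x *\<^sub>R d x)"
      proof (cases "x \<in> cbox l u")
        case True
        have "\<bar>d x\<bar> * \<bar>bumpn l u m x\<bar> \<le> \<bar>d x\<bar> * 1"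
          using bumpn_bounds[of l u m x] by (intro mult_left_mono) auto
        then show ?thesis using True by (simp add: abs_mult)
      next
        case False
        then show ?thesis using bumpn_zero[OF False] by simp
      qed
    qed
  qed
  moreover have "(\<integral>x. d x * bumpn l u m x \<partial>lborel) = 0" for m
    using T[OF test_fn_bumpn] .
  ultimately have "(\<lambda>m. 0::real) \<longlonglongrightarrow> (\<integral>x. indicator (box l u) x *\<^sub>R d x \<partial>lborel)"
    by simp
  from LIMSEQ_unique[OF this tendsto_const] show ?thesis
    unfolding set_lebesgue_integral_def by simp
qed

lemma fundamental_lemma:
  fixes d :: "real^'n::finite \<Rightarrow> real"
  assumes d: "d \<in> borel_measurable lborel" "\<And>K. compact K \<Longrightarrow> set_integrable lborel K d"
    and T: "\<And>\<phi>. test_fn \<phi> \<Longrightarrow> (\<integral>x. d x * \<phi> x \<partial>lborel) = 0"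
  shows "AE x in lborel. d x = 0"
proof -
  have main: "AE x in lborel. indicator (box a b) x * d x = 0" for a b :: "real^'n"
  proof -
    have intB: "set_integrable lborel (box a b) d"
      by (rule set_integrable_subset[OF d(2)[OF compact_cbox[of a b]]]) (auto simp: box_subset_cbox)
    have "(LINT x:(A \<inter> box a b)|lborel. d x) = 0" if A: "A \<in> sets lborel" for A
    proof -
      have "Int_stable (range (\<lambda>(a, b). box a b :: (real^'n) set))"
        by (auto simp: Int_stable_def box_Int_box)
      moreover have "(range (\<lambda>(a, b). box a b :: (real^'n) set)) \<subseteq> Pow UNIV"
        by auto
      moreover have "A \<in> sigma_sets UNIV (range (\<lambda>(a, b). box a b :: (real^'n) set))"
        using A unfolding sets_lborel borel_eq_box by simp
      ultimately show ?thesis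
      proof (induction rule: sigma_sets_induct_disjoint)
        case (basic A)
        then obtain l u where "A = box l u" by auto
        then have "A \<inter> box a b = box (\<Sum>i\<in>Basis. max (l \<bullet> i) (a \<bullet> i) *\<^sub>R i) (\<Sum>i\<in>Basis. min (u \<bullet> i) (b \<bullet> i) *\<^sub>R i)"
          by (simp add: box_Int_box)
        then show ?case using box_integral_zero[OF d T] by simp
      next
        case empty
        then show ?case by (simp add: set_lebesgue_integral_def)
      next
        case (compl A)
        have [measurable]: "A \<in> sets lborel"
          using compl(1) unfolding sets_lborel borel_eq_box by simp
        have "(LINT x:((UNIV - A) \<inter> box a b)|lborel. d x) + (LINT x:(A \<inter> box a b)|lborel. d x)
            = (LINT x:(((UNIV - A) \<inter> box a b) \<union> (A \<inter> box a b))|lborel. d x)"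
          by (rule set_integral_Un[symmetric])
            (auto intro: set_integrable_subset[OF intB])
        also have "((UNIV - A) \<inter> box a b) \<union> (A \<inter> box a b) = box a b"
          by auto
        also have "(LINT x:box a b|lborel. d x) = 0"
          using box_integral_zero[OF d T] by simp
        finally show ?case using compl(2) by simp
      next
        case (union F)
        have [measurable]: "F i \<in> sets lborel" for i
          using union(2) unfolding sets_lborel borel_eq_box by auto
        have "(LINT x:(\<Union>i. F i \<inter> box a b)|lborel. d x) = (\<Sum>i. (LINT x:(F i \<inter> box a b)|lborel. d x))"
        proof (rule lebesgue_integral_countable_add)
          show "F i \<inter> box a b \<in> sets lborel" for i by simp
          show "(F i \<inter> box a b) \<inter> (F j \<inter> box a b) = {}" if "i \<noteq> j" for i j
            using union(1) that unfolding disjoint_family_on_def by auto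
          show "set_integrable lborel (\<Union>i. F i \<inter> box a b) d"
            by (rule set_integrable_subset[OF intB]) auto
        qed
        also have "\<dots> = 0" using union(3) by simp
        also have "(\<Union>i. F i \<inter> box a b) = (\<Union>i. F i) \<inter> box a b" by auto
        finally show ?case .
      qed
    qed
    moreover have "integrable lborel (\<lambda>x. indicator (box a b) x * d x)"
      using intB unfolding set_integrable_def by simp
    ultimately show ?thesis
      by (intro sigma_finite_measure.density_zero[OF sigma_finite_lborel]) (auto simp: set_lebesgue_integral_def indicator_inter_arith mult.assoc)
  qed
  define c :: "nat \<Rightarrow> real^'n" where "c N = (\<chi> k. real N)" for N :: nat
  have "AE x in lborel. \<forall>N. indicator (box (- c N) (c N)) x * d x = 0"
    by (subst AE_all_countable) (intro allI main)
  then show ?thesis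
  proof (rule AE_mp[OF _ AE_I2], intro impI)
    fix x :: "real^'n" assume H: "\<forall>N. indicator (box (- c N) (c N)) x * d x = 0"
    define N where "N = nat \<lceil>norm x\<rceil> + 1"
    have "x \<in> box (- c N) (c N)"
      unfolding mem_box_cart
    proof
      fix k
      have "\<bar>x$k\<bar> \<le> norm x" by (rule component_le_norm_cart)
      also have "\<dots> < real N" unfolding N_def by linarith
      finally show "(- c N) $ k < x $ k \<and> x $ k < c N $ k" unfolding c_def by auto
    qed
    then show "d x = 0" using H[rule_format, of N] by simp
  qed
qed

lemma lborel_translate_integral:
  fixes f :: "'a::euclidean_space \<Rightarrow> real"
  assumes f[measurable]: "f \<in> borel_measurable borel"
  shows "(\<integral>x. f (c + x) \<partial>lborel) = (\<integral>x. f x \<partial>lborel)"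
proof -
  have "(\<integral>x. f x \<partial>lborel) = (\<integral>x. f x \<partial>(distr lborel borel ((+) c)))"
    by (simp add: lborel_distr_plus)
  also have "\<dots> = (\<integral>x. f (c + x) \<partial>lborel)"
    by (rule integral_distr) auto
  finally show ?thesis by simp
qed

lemma lborel_translate_integrable:
  fixes f :: "'a::euclidean_space \<Rightarrow> real"
  assumes f[measurable]: "f \<in> borel_measurable borel"
  shows "integrable lborel (\<lambda>x. f (c + x)) \<longleftrightarrow> integrable lborel f"
proof -
  have "integrable lborel f \<longleftrightarrow> integrable (distr lborel borel ((+) c)) f"
    by (simp add: lborel_distr_plus)
  also have "\<dots> \<longleftrightarrow> integrable lborel (\<lambda>x. f (c + x))"
    by (rule integrable_distr_eq) auto
  finally show ?thesis by simp
qed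

lemma lborel_translate_nn_integral:
  fixes f :: "'a::euclidean_space \<Rightarrow> ennreal"
  assumes f[measurable]: "f \<in> borel_measurable borel"
  shows "(\<integral>\<^sup>+x. f (c + x) \<partial>lborel) = (\<integral>\<^sup>+x. f x \<partial>lborel)"
proof -
  have "(\<integral>\<^sup>+x. f x \<partial>lborel) = (\<integral>\<^sup>+x. f x \<partial>(distr lborel borel ((+) c)))"
    by (simp add: lborel_distr_plus)
  also have "\<dots> = (\<integral>\<^sup>+x. f (c + x) \<partial>lborel)"
    by (rule nn_integral_distr) auto
  finally show ?thesis by simp
qed

lemma ibp_core:
  fixes u D :: "'a::euclidean_space \<Rightarrow> real" and e :: 'a
  assumes u: "integrable lborel u" and D: "integrable lborel D"
    and ftc: "AE x in lborel. ((\<lambda>t. D (x + t *\<^sub>R e)) has_integral (u (x + e) - u x)) {0..1}"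
  shows "(\<integral>x. D x \<partial>lborel) = 0"
proof -
  have Dm[measurable]: "D \<in> borel_measurable borel" using D by simp
  have um[measurable]: "u \<in> borel_measurable borel" using u by simp
  define w where "w = (\<lambda>(x::'a, t::real). indicator {0..1} t * D (x + t *\<^sub>R e))"
  have wm[measurable]: "w \<in> borel_measurable (lborel \<Otimes>\<^sub>M lborel)"
    unfolding w_def by measurable
  have nnD: "(\<integral>\<^sup>+x. ennreal (norm (D (x + c))) \<partial>lborel) = (\<integral>\<^sup>+x. ennreal (norm (D x)) \<partial>lborel)" for c
    using lborel_translate_nn_integral[of "\<lambda>x. ennreal (norm (D x))" c] by (simp add: add.commute)
  have "(\<integral>\<^sup>+p. ennreal (norm (w p)) \<partial>(lborel \<Otimes>\<^sub>M lborel))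
      = (\<integral>\<^sup>+t. \<integral>\<^sup>+x. ennreal (norm (w (x, t))) \<partial>lborel \<partial>lborel)"
    by (rule lborel_pair.nn_integral_snd[symmetric]) measurable
  also have "\<dots> = (\<integral>\<^sup>+t. indicator {0..1::real} t * (\<integral>\<^sup>+x. ennreal (norm (D x)) \<partial>lborel) \<partial>lborel)"
  proof (rule nn_integral_cong)
    fix t :: real
    have "(\<integral>\<^sup>+x. ennreal (norm (w (x, t))) \<partial>lborel) = (\<integral>\<^sup>+x. indicator {0..1} t * ennreal (norm (D (x + t *\<^sub>R e))) \<partial>lborel)"
      by (rule nn_integral_cong) (auto simp: w_def indicator_def)
    also have "\<dots> = indicator {0..1} t * (\<integral>\<^sup>+x. ennreal (norm (D (x + t *\<^sub>R e))) \<partial>lborel)"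
      by (rule nn_integral_cmult) measurable
    also have "\<dots> = indicator {0..1} t * (\<integral>\<^sup>+x. ennreal (norm (D x)) \<partial>lborel)"
      using nnD by simp
    finally show "(\<integral>\<^sup>+x. ennreal (norm (w (x, t))) \<partial>lborel) = indicator {0..1} t * (\<integral>\<^sup>+x. ennreal (norm (D x)) \<partial>lborel)" .
  qed
  also have "\<dots> = (\<integral>\<^sup>+x. ennreal (norm (D x)) \<partial>lborel)"
    by (subst mult.commute) (simp add: nn_integral_cmult_indicator)
  also have "\<dots> < \<infinity>" using D by (simp add: integrable_iff_bounded)
  finally have wi: "integrable (lborel \<Otimes>\<^sub>M lborel) w"
    using wm by (simp add: integrable_iff_bounded)
  have wi': "integrable (lborel \<Otimes>\<^sub>M lborel) (\<lambda>(x, t). w (x, t))" using wi by simp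
  have "(\<integral>t. \<integral>x. w (x, t) \<partial>lborel \<partial>lborel) = (\<integral>x. \<integral>t. w (x, t) \<partial>lborel \<partial>lborel)"
    using lborel_pair.Fubini_integral[OF wi'] by simp
  moreover have "(\<integral>t. \<integral>x. w (x, t) \<partial>lborel \<partial>lborel) = (\<integral>x. D x \<partial>lborel)"
  proof -
    have "(\<integral>x. w (x, t) \<partial>lborel) = indicator {0..1} t * (\<integral>x. D x \<partial>lborel)" for t
    proof -
      have "(\<integral>x. w (x, t) \<partial>lborel) = indicator {0..1} t * (\<integral>x. D (t *\<^sub>R e + x) \<partial>lborel)"
        by (simp add: w_def add.commute)
      also have "(\<integral>x. D (t *\<^sub>R e + x) \<partial>lborel) = (\<integral>x. D x \<partial>lborel)"
        by (rule lborel_translate_integral) simp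
      finally show ?thesis .
    qed
    then have "(\<integral>t. \<integral>x. w (x, t) \<partial>lborel \<partial>lborel) = (\<integral>t. indicator {0..1::real} t * (\<integral>x. D x \<partial>lborel) \<partial>lborel)"
      by simp
    also have "\<dots> = (\<integral>x. D x \<partial>lborel)"
      by simp
    finally show ?thesis .
  qed
  moreover have "(\<integral>x. \<integral>t. w (x, t) \<partial>lborel \<partial>lborel) = (\<integral>x. u (x + e) - u x \<partial>lborel)"
  proof (rule integral_cong_AE)
    show "(\<lambda>x. \<integral>t. w (x, t) \<partial>lborel) \<in> borel_measurable lborel"
      using wm by measurable
    show "(\<lambda>x. u (x + e) - u x) \<in> borel_measurable lborel" by measurable
    have "AE x in lborel. integrable lborel (\<lambda>t. w (x, t))"
      using lborel_pair.AE_integrable_fst'[OF wi] .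
    then show "AE x in lborel. (\<integral>t. w (x, t) \<partial>lborel) = u (x + e) - u x"
      using ftc
    proof eventually_elim
      case (elim x)
      have si: "set_integrable lborel {0..1} (\<lambda>t. D (x + t *\<^sub>R e))"
        using elim(1) unfolding set_integrable_def w_def by simp
      then have "(\<integral>t. w (x, t) \<partial>lborel) = integral {0..1} (\<lambda>t. D (x + t *\<^sub>R e))"
        using set_borel_integral_eq_integral(2)[OF si] unfolding set_lebesgue_integral_def w_def by simp
      also have "\<dots> = u (x + e) - u x" using elim(2) by (rule integral_unique)
      finally show ?case .
    qed
  qed
  moreover have "(\<integral>x. u (x + e) - u x \<partial>lborel) = 0"
  proof -
    have ue: "integrable lborel (\<lambda>x. u (x + e))"
      using lborel_translate_integrable[OF um, of e] u by (simp add: add.commute)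
    have "(\<integral>x. u (x + e) \<partial>lborel) = (\<integral>x. u x \<partial>lborel)"
      using lborel_translate_integral[OF um, of e] by (simp add: add.commute)
    then show ?thesis using ue u by simp
  qed
  ultimately show ?thesis by simp
qed

lemma finite_line_sphere:
  fixes x :: "real^'n::finite"
  shows "finite {t::real. norm (x + t *\<^sub>R axis i 1) = 1}"
proof -
  define p where "p = [: (x \<bullet> x) - 1, 2 * (x$i), 1 :]"
  have "p \<noteq> 0" unfolding p_def by simp
  have "{t::real. norm (x + t *\<^sub>R axis i 1) = 1} \<subseteq> {t. poly p t = 0}"
  proof safe
    fix t :: real assume "norm (x + t *\<^sub>R axis i 1) = 1"
    then have "(x + t *\<^sub>R axis i 1) \<bullet> (x + t *\<^sub>R axis i 1) = 1"
      by (metis norm_eq_sqrt_inner real_sqrt_eq_1_iff)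
    then have "x \<bullet> x + 2 * t * (x$i) + t * t = 1"
      by (simp add: inner_add_left inner_add_right inner_axis inner_commute algebra_simps)
    then show "poly p t = 0" unfolding p_def by (simp add: algebra_simps)
  qed
  then show ?thesis using poly_roots_finite[OF \<open>p \<noteq> 0\<close>] finite_subset by blast
qed

lemma finite_line_zero:
  fixes x :: "real^'n::finite"
  shows "finite {t::real. x + t *\<^sub>R axis i 1 = 0}"
proof -
  have "{t::real. x + t *\<^sub>R axis i 1 = 0} \<subseteq> {- (x$i)}"
  proof safe
    fix t :: real assume "x + t *\<^sub>R axis i 1 = 0"
    then have "(x + t *\<^sub>R axis i 1) $ i = 0" by simp
    then show "t = - (x$i)" by simp
  qed
  then show ?thesis using finite_subset by blast
qed

lemma AE_line_avoids_0:
  fixes i :: "'n::finite"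
  assumes "CARD('n) \<ge> 2"
  shows "AE x::real^'n in lborel. \<forall>t::real. x + t *\<^sub>R axis i 1 \<noteq> 0"
proof -
  obtain k :: 'n where "k \<noteq> i"
  proof -
    have "\<not> (UNIV :: 'n set) \<subseteq> {i}"
    proof
      assume "(UNIV :: 'n set) \<subseteq> {i}"
      then have "CARD('n) \<le> card {i}" by (intro card_mono) auto
      then show False using assms by simp
    qed
    then show ?thesis using that by blast
  qed
  have "negligible {x::real^'n. x$k = 0}" by (rule negligible_standard_hyperplane_cart)
  then have "{x::real^'n. x$k = 0} \<in> null_sets lebesgue" by (simp add: negligible_iff_null_sets)
  moreover have "{x::real^'n. x$k = 0} \<in> sets lborel"
  proof -
    have "closed ((\<lambda>x::real^'n. x$k) -` {0::real})" by (rule closed_vimage_vec_nth) simp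
    then have "closed {x::real^'n. x$k = 0}" by (simp add: vimage_def)
    then show ?thesis by (simp add: borel_closed)
  qed
  ultimately have "{x::real^'n. x$k = 0} \<in> null_sets lborel"
    using null_sets_completion_iff by blast
  then have "AE x in lborel. x \<notin> {x::real^'n. x$k = 0}" by (rule AE_not_in)
  then show ?thesis
  proof (rule AE_mp[OF _ AE_I2], intro impI allI)
    fix x :: "real^'n" and t :: real
    assume "x \<notin> {x. x$k = 0}"
    then have "(x + t *\<^sub>R axis i 1) $ k \<noteq> 0" using \<open>k \<noteq> i\<close> by (simp add: axis_def)
    then show "x + t *\<^sub>R axis i 1 \<noteq> 0" by (metis zero_index)
  qed
qed

lemma weak_partial_from_classical:
  fixes F G :: "real^'n::finite \<Rightarrow> real" and i :: 'n
  assumes LF: "locally_Lp 1 F" and LG: "locally_Lp 1 G"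
    and cont: "\<And>y. y \<noteq> 0 \<Longrightarrow> isCont F y"
    and cont0: "isCont F 0 \<or> CARD('n) \<ge> 2"
    and der: "\<And>y. norm y \<noteq> 0 \<Longrightarrow> norm y \<noteq> 1 \<Longrightarrow>
                 \<exists>F'. (F has_derivative F') (at y) \<and> F' (axis i 1) = G y"
  shows "weak_partial i F G"
  unfolding weak_partial_def
proof (intro allI impI)
  fix \<phi> :: "real^'n \<Rightarrow> real" assume \<phi>: "test_fn \<phi>"
  define e :: "real^'n" where "e = axis i 1"
  define u where "u x = F x * \<phi> x" for x
  define D where "D x = G x * \<phi> x + F x * cpartial i \<phi> x" for x
  have iG: "integrable lborel (\<lambda>x. G x * \<phi> x)" using test_fn_integrable(1)[OF \<phi> LG] .
  have iF: "integrable lborel (\<lambda>x. F x * cpartial i \<phi> x)" using test_fn_integrable(2)[OF \<phi> LF] .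
  have iu: "integrable lborel u" unfolding u_def using test_fn_integrable(1)[OF \<phi> LF] .
  have iD: "integrable lborel D" unfolding D_def using iG iF by simp
  have phic: "isCont \<phi> y" for y
    using continuous_on_eq_continuous_at[OF open_UNIV] test_fn_cont(1)[OF \<phi>] by blast
  have good: "AE x in lborel. (\<forall>t::real. x + t *\<^sub>R e \<noteq> 0) \<or> isCont F 0"
    using cont0
  proof
    assume "isCont F 0" then show ?thesis by simp
  next
    assume "CARD('n) \<ge> 2"
    from AE_line_avoids_0[OF this, of i] show ?thesis unfolding e_def by (rule AE_mp) auto
  qed
  have ftc: "AE x in lborel. ((\<lambda>t. D (x + t *\<^sub>R e)) has_integral (u (x + e) - u x)) {0..1}"
    using good
  proof (rule AE_mp[OF _ AE_I2], intro impI)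
    fix x :: "real^'n" assume gx: "(\<forall>t::real. x + t *\<^sub>R e \<noteq> 0) \<or> isCont F 0"
    define S where "S = {t::real. norm (x + t *\<^sub>R e) = 1} \<union> {t. x + t *\<^sub>R e = 0}"
    have fS: "finite S" unfolding S_def e_def using finite_line_sphere finite_line_zero by blast
    have Fc: "isCont F (x + t *\<^sub>R e)" for t
      using gx cont by (cases "x + t *\<^sub>R e = 0") auto
    have lc: "isCont (\<lambda>s. u (x + s *\<^sub>R e)) t" for t
    proof -
      have l: "isCont (\<lambda>s::real. x + s *\<^sub>R e) t" by (intro continuous_intros)
      show ?thesis unfolding u_def
        by (intro continuous_intros isCont_o2[OF l Fc] isCont_o2[OF l phic])
    qed
    have "((\<lambda>t. D (x + t *\<^sub>R e)) has_integral ((\<lambda>s. u (x + s *\<^sub>R e)) 1 - (\<lambda>s. u (x + s *\<^sub>R e)) 0)) {0..1}"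
    proof (rule fundamental_theorem_of_calculus_interior_strong[OF fS])
      show "continuous_on {0..1} (\<lambda>s. u (x + s *\<^sub>R e))"
        using lc by (simp add: continuous_at_imp_continuous_on)
      fix t assume t: "t \<in> {0<..<1} - S"
      define y where "y = x + t *\<^sub>R e"
      have ny: "norm y \<noteq> 0" "norm y \<noteq> 1" using t unfolding S_def y_def by auto
      obtain F' where F': "(F has_derivative F') (at y)" "F' e = G y"
        using der[OF ny] unfolding e_def by blast
      obtain \<phi>' where \<phi>': "(\<phi> has_derivative \<phi>') (at y)"
        using test_fn_differentiable[OF \<phi> iter_partials.base] differentiable_def by blast
      have \<phi>'e: "\<phi>' e = cpartial i \<phi> y"
        unfolding cpartial_def e_def using frechet_derivative_at[OF \<phi>'] by simp
      have l: "((\<lambda>s::real. x + s *\<^sub>R e) has_derivative (\<lambda>s. s *\<^sub>R e)) (at t)"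
        by (auto intro!: derivative_eq_intros)
      have dF: "((\<lambda>s. F (x + s *\<^sub>R e)) has_derivative (\<lambda>s. F' (s *\<^sub>R e))) (at t)"
        using diff_chain_at[OF l, of F F'] F'(1) unfolding y_def by (simp add: o_def)
      have d\<phi>: "((\<lambda>s. \<phi> (x + s *\<^sub>R e)) has_derivative (\<lambda>s. \<phi>' (s *\<^sub>R e))) (at t)"
        using diff_chain_at[OF l, of \<phi> \<phi>'] \<phi>' unfolding y_def by (simp add: o_def)
      have "((\<lambda>s. u (x + s *\<^sub>R e)) has_derivative
          (\<lambda>h. F (x + t *\<^sub>R e) * \<phi>' (h *\<^sub>R e) + F' (h *\<^sub>R e) * \<phi> (x + t *\<^sub>R e))) (at t)"
        unfolding u_def by (rule has_derivative_mult[OF dF d\<phi>])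
      moreover have "(\<lambda>h. F (x + t *\<^sub>R e) * \<phi>' (h *\<^sub>R e) + F' (h *\<^sub>R e) * \<phi> (x + t *\<^sub>R e))
          = (\<lambda>h. h *\<^sub>R D (x + t *\<^sub>R e))"
      proof
        fix h :: real
        have "\<phi>' (h *\<^sub>R e) = h * \<phi>' e" using linear.scaleR[OF has_derivative_linear[OF \<phi>']] by simp
        moreover have "F' (h *\<^sub>R e) = h * F' e" using linear.scaleR[OF has_derivative_linear[OF F'(1)]] by simp
        ultimately show "F (x + t *\<^sub>R e) * \<phi>' (h *\<^sub>R e) + F' (h *\<^sub>R e) * \<phi> (x + t *\<^sub>R e) = h *\<^sub>R D (x + t *\<^sub>R e)"
          using F'(2) \<phi>'e unfolding D_def y_def by (simp add: algebra_simps)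
      qed
      ultimately show "((\<lambda>s. u (x + s *\<^sub>R e)) has_vector_derivative D (x + t *\<^sub>R e)) (at t)"
        unfolding has_vector_derivative_def by simp
    qed simp
    then show "((\<lambda>t. D (x + t *\<^sub>R e)) has_integral (u (x + e) - u x)) {0..1}" by simp
  qed
  have "(\<integral>x. D x \<partial>lborel) = 0" by (rule ibp_core[OF iu iD ftc])
  then have "(\<integral>x. G x * \<phi> x \<partial>lborel) + (\<integral>x. F x * cpartial i \<phi> x \<partial>lborel) = 0"
    unfolding D_def using iG iF by simp
  then show "(\<integral>x. F x * cpartial i \<phi> x \<partial>lborel) = - (\<integral>x. G x * \<phi> x \<partial>lborel)" by linarith
qed

lemma emeasure_cball_cart:
  assumes "0 \<le> \<rho>"
  shows "emeasure lborel (cball (0::real^'n::finite) \<rho>) = ennreal (\<rho> ^ CARD('n) * measure lborel (ball (0::real^'n) 1))"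
proof -
  have "emeasure lborel (cball (0::real^'n) \<rho>) = ennreal (measure lborel (cball (0::real^'n) \<rho>))"
    using emeasure_lborel_cball_finite[of "0::real^'n" \<rho>] by (simp add: emeasure_eq_ennreal_measure)
  also have "measure lborel (cball (0::real^'n) \<rho>) = \<rho> ^ CARD('n) * measure lborel (ball (0::real^'n) 1)"
    by (subst content_cball_conv_ball) (use content_ball_conv_unit_ball[OF assms, of "0::real^'n"] in simp)
  finally show ?thesis .
qed

lemma ennreal_le_suminf: "(f::nat \<Rightarrow> ennreal) k \<le> (\<Sum>i. f i)"
proof (rule ccontr)
  assume "\<not> f k \<le> (\<Sum>i. f i)"
  then have "(\<Sum>i. f i) < f k" by simp
  then have "f k < f k" by (rule ennreal_suminf_lessD)
  then show False by simp
qed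

lemma singular_integrable:
  fixes s :: real
  assumes s: "0 \<le> s" "s < real CARD('n::finite)"
  shows "integrable lborel (\<lambda>x::real^'n. indicator (cball 0 1) x * norm x powr (-s))"
proof -
  define n where "n = real CARD('n)"
  define V where "V = measure lborel (ball (0::real^'n) 1)"
  define c where "c k = 2 powr ((real k + 1) * s)" for k :: nat
  define \<rho> where "\<rho> k = 2 powr (- real k)" for k :: nat
  have V: "0 \<le> V" unfolding V_def by simp
  have cb[measurable]: "cball (c::real^'n) r \<in> sets lborel" for c r by (simp add: borel_closed)
  have pw: "ennreal (norm (indicator (cball 0 1) x * norm x powr (-s)))
      \<le> (\<Sum>k. ennreal (c k) * indicator (cball (0::real^'n) (\<rho> k)) x)" for x :: "real^'n"
  proof (cases "x \<in> cball 0 1 \<and> x \<noteq> 0")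
    case False
    then have "indicator (cball 0 1) x * norm x powr (-s) = (0::real)" by auto
    then have "ennreal (norm (indicator (cball 0 1) x * norm x powr (-s))) = 0" by (simp only: norm_zero ennreal_0)
    then show ?thesis by (simp only: zero_le)
  next
    case True
    define r where "r = norm x"
    have r: "0 < r" "r \<le> 1" using True unfolding r_def by auto
    define t where "t = - log 2 r"
    have t0: "0 \<le> t" unfolding t_def using r by simp
    define k where "k = nat \<lfloor>t\<rfloor>"
    have k1: "real k \<le> t" "t < real k + 1" unfolding k_def using t0 by linarith+
    have rt: "r = 2 powr (- t)" unfolding t_def using r by simp
    have "r \<le> \<rho> k" unfolding rt \<rho>_def using k1 by (intro powr_mono) auto
    then have ind: "indicator (cball (0::real^'n) (\<rho> k)) x = (1::ennreal)" unfolding r_def by simp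
    have "r powr (-s) = 2 powr (t * s)" unfolding rt powr_powr by simp
    also have "\<dots> \<le> c k" unfolding c_def using k1 s by (intro powr_mono mult_right_mono) auto
    finally have "norm (indicator (cball 0 1) x * norm x powr (-s)) \<le> c k"
      using True unfolding r_def by simp
    then have "ennreal (norm (indicator (cball 0 1) x * norm x powr (-s))) \<le> ennreal (c k) * indicator (cball (0::real^'n) (\<rho> k)) x"
      using ind by (simp add: ennreal_leI)
    also have "\<dots> \<le> (\<Sum>k. ennreal (c k) * indicator (cball (0::real^'n) (\<rho> k)) x)"
      by (rule ennreal_le_suminf)
    finally show ?thesis .
  qed
  have "(\<integral>\<^sup>+x. ennreal (norm (indicator (cball (0::real^'n) 1) x * norm x powr (-s))) \<partial>lborel)
      \<le> (\<integral>\<^sup>+x. (\<Sum>k. ennreal (c k) * indicator (cball (0::real^'n) (\<rho> k)) x) \<partial>lborel)"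
    by (intro nn_integral_mono pw)
  also have "\<dots> = (\<Sum>k. \<integral>\<^sup>+x. ennreal (c k) * indicator (cball (0::real^'n) (\<rho> k)) x \<partial>lborel)"
    by (rule nn_integral_suminf) (use cb in measurable)
  also have "\<dots> = (\<Sum>k. ennreal (2 powr s * V * (2 powr (s - n)) ^ k))"
  proof (rule suminf_cong)
    fix k
    have "(\<integral>\<^sup>+x. ennreal (c k) * indicator (cball (0::real^'n) (\<rho> k)) x \<partial>lborel)
        = ennreal (c k) * emeasure lborel (cball (0::real^'n) (\<rho> k))"
      by (simp add: nn_integral_cmult_indicator)
    also have "\<dots> = ennreal (c k * (\<rho> k ^ CARD('n) * V))"
      unfolding V_def by (subst emeasure_cball_cart) (auto simp: \<rho>_def c_def ennreal_mult)
    also have "c k * (\<rho> k ^ CARD('n) * V) = 2 powr s * V * (2 powr (s - n)) ^ k"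
    proof -
      have h1: "\<rho> k ^ CARD('n) = 2 powr (- real k * n)"
        unfolding \<rho>_def n_def by (simp add: powr_realpow[symmetric] powr_powr)
      have h2: "(2 powr (s - n)) ^ k = 2 powr ((s - n) * real k)"
        by (simp add: powr_realpow[symmetric] powr_powr)
      have e3: "(real k + 1) * s = s + real k * s" by (simp add: algebra_simps)
      have h3: "c k = 2 powr s * 2 powr (real k * s)"
        unfolding c_def by (simp only: e3 powr_add)
      have e: "real k * s + - real k * n = (s - n) * real k" by (simp add: algebra_simps)
      have P: "2 powr (real k * s) * 2 powr (- real k * n) = 2 powr ((s - n) * real k)"
        by (simp only: powr_add[symmetric] e)
      have "c k * (\<rho> k ^ CARD('n) * V) = 2 powr s * V * (2 powr (real k * s) * 2 powr (- real k * n))"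
        unfolding h1 h3 by (simp only: mult_ac)
      also have "\<dots> = 2 powr s * V * (2 powr (s - n)) ^ k"
        unfolding P h2 ..
      finally show ?thesis .
    qed
    finally show "(\<integral>\<^sup>+x. ennreal (c k) * indicator (cball (0::real^'n) (\<rho> k)) x \<partial>lborel)
        = ennreal (2 powr s * V * (2 powr (s - n)) ^ k)" .
  qed
  also have "\<dots> < \<infinity>"
  proof -
    have q: "norm (2 powr (s - n)) < 1" using s unfolding n_def by (simp add: powr_less_one)
    have "summable (\<lambda>k. 2 powr s * V * (2 powr (s - n)) ^ k)"
      by (intro summable_mult summable_geometric q)
    moreover have "0 \<le> 2 powr s * V * (2 powr (s - n)) ^ k" for k using V by simp
    ultimately have "(\<Sum>k. ennreal (2 powr s * V * (2 powr (s - n)) ^ k)) \<noteq> top"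
      by (rule ennreal_suminf_neq_top)
    then show ?thesis by (simp only: less_top infinity_ennreal_def)
  qed
  finally show ?thesis by (simp add: integrable_iff_bounded)
qed

definition Gf :: "real \<Rightarrow> 'n::finite \<Rightarrow> real^'n \<Rightarrow> real" where
  "Gf \<alpha> i x = (1 + \<alpha>) * (min (norm x) 1) powr (\<alpha> - 1) * x$i"

lemma powr_m1: "0 < r \<Longrightarrow> r powr (a - 1) = r powr a / (r::real)"
  by (simp add: powr_diff)

lemma norm_powr_has_derivative:
  fixes y :: "'a::real_inner"
  assumes "y \<noteq> 0"
  shows "((\<lambda>x. norm x powr a) has_derivative (\<lambda>h. a * norm y powr (a - 2) * (y \<bullet> h))) (at y)"
proof -
  define r where "r = norm y"
  have r: "0 < r" using assms unfolding r_def by simp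
  have dn: "(norm has_derivative (\<lambda>h. h \<bullet> sgn y)) (at y)" using has_derivative_norm[OF assms] .
  have "((\<lambda>s. s powr a) has_real_derivative a * r powr (a - 1)) (at r)"
    using has_real_derivative_powr[OF r] .
  then have dp: "((\<lambda>s. s powr a) has_derivative (\<lambda>t. (a * r powr (a - 1)) * t)) (at (norm y))"
    unfolding r_def has_field_derivative_def by simp
  have "((\<lambda>s. s powr a) \<circ> norm has_derivative (\<lambda>t. (a * r powr (a - 1)) * t) \<circ> (\<lambda>h. h \<bullet> sgn y)) (at y)"
    by (rule diff_chain_at[OF dn dp])
  moreover have "(\<lambda>t. (a * r powr (a - 1)) * t) \<circ> (\<lambda>h. h \<bullet> sgn y) = (\<lambda>h. a * norm y powr (a - 2) * (y \<bullet> h))"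
  proof
    fix h
    have "r powr (a - 2) = r powr (a - 1) / r"
      using powr_m1[OF r, of "a - 1"] by simp
    then show "((\<lambda>t. (a * r powr (a - 1)) * t) \<circ> (\<lambda>h. h \<bullet> sgn y)) h = a * norm y powr (a - 2) * (y \<bullet> h)"
      using r unfolding r_def by (simp add: sgn_div_norm inner_commute field_simps)
  qed
  ultimately show ?thesis by (simp add: o_def)
qed

lemma inner_axis1: "(y::real^'n::finite) \<bullet> axis i 1 = y$i"
  by (simp add: inner_axis)

lemma f_alpha_has_derivative:
  fixes y :: "real^'n::finite"
  assumes "norm y \<noteq> 0" "norm y \<noteq> 1"
  shows "(f_alpha \<alpha> has_derivative (\<lambda>h. (1 + \<alpha>) * (min (norm y) 1) powr (\<alpha> - 1) * (y \<bullet> h))) (at y)"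
proof (cases "norm y < 1")
  case True
  have y0: "y \<noteq> 0" using assms by simp
  have "((\<lambda>x. norm x powr (1 + \<alpha>) + (\<alpha> - 1) / 2) has_derivative
      (\<lambda>h. (1 + \<alpha>) * norm y powr ((1 + \<alpha>) - 2) * (y \<bullet> h) + 0)) (at y)"
    by (rule has_derivative_add[OF norm_powr_has_derivative[OF y0] has_derivative_const])
  then have "((\<lambda>x. norm x powr (1 + \<alpha>) + (\<alpha> - 1) / 2) has_derivative
      (\<lambda>h. (1 + \<alpha>) * norm y powr ((1 + \<alpha>) - 2) * (y \<bullet> h))) (at y)" by simp
  then have "(f_alpha \<alpha> has_derivative (\<lambda>h. (1 + \<alpha>) * norm y powr ((1 + \<alpha>) - 2) * (y \<bullet> h))) (at y)"
    by (rule has_derivative_transform_within_open[where s="ball 0 1"])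
      (use True in \<open>auto simp: f_alpha_def\<close>)
  moreover have "(1 + \<alpha>) - 2 = \<alpha> - 1" by simp
  ultimately show ?thesis using True by simp
next
  case False
  then have y1: "norm y > 1" using assms by simp
  have "((\<lambda>x. (1 + \<alpha>) / 2 * (x \<bullet> x)) has_derivative
      (\<lambda>h. (1 + \<alpha>) / 2 * (h \<bullet> y + y \<bullet> h))) (at y)"
    by (auto intro!: derivative_eq_intros)
  then have "(f_alpha \<alpha> has_derivative (\<lambda>h. (1 + \<alpha>) / 2 * (h \<bullet> y + y \<bullet> h))) (at y)"
  proof (rule has_derivative_transform_within_open[where s="- cball 0 1"])
    show "open (- cball (0::real^'n) 1)" by auto
    show "y \<in> - cball 0 1" using y1 by simp
    fix x :: "real^'n" assume "x \<in> - cball 0 1"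
    then show "(1 + \<alpha>) / 2 * (x \<bullet> x) = f_alpha \<alpha> x"
      by (simp add: f_alpha_def power2_norm_eq_inner)
  qed
  moreover have "(\<lambda>h. (1 + \<alpha>) / 2 * (h \<bullet> y + y \<bullet> h)) = (\<lambda>h. (1 + \<alpha>) * (min (norm y) 1) powr (\<alpha> - 1) * (y \<bullet> h))"
    using y1 by (auto simp: inner_commute fun_eq_iff)
  ultimately show ?thesis by simp
qed

lemma cpartial_f_alpha:
  fixes y :: "real^'n::finite"
  assumes "norm y \<noteq> 0" "norm y \<noteq> 1"
  shows "cpartial i (f_alpha \<alpha>) y = Gf \<alpha> i y"
  unfolding cpartial_def using frechet_derivative_at[OF f_alpha_has_derivative[OF assms, of \<alpha>], symmetric]
  by (simp add: Gf_def inner_axis1)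

lemma Gf_has_derivative:
  fixes y :: "real^'n::finite"
  assumes "norm y \<noteq> 0" "norm y \<noteq> 1"
  shows "\<exists>G'. (Gf \<alpha> i has_derivative G') (at y) \<and> (\<forall>j. G' (axis j 1) = hess_alpha \<alpha> i j y)"
proof (cases "norm y < 1")
  case True
  define r where "r = norm y"
  have y0: "y \<noteq> 0" and r: "0 < r" using assms unfolding r_def by auto
  have li: "((\<lambda>x::real^'n. x$i) has_derivative (\<lambda>h. h$i)) (at y)"
    by (rule bounded_linear_imp_has_derivative) (rule bounded_linear_vec_nth)
  have "((\<lambda>x. (1 + \<alpha>) * (norm x powr (\<alpha> - 1) * x$i)) has_derivative
      (\<lambda>h. (1 + \<alpha>) * (norm y powr (\<alpha> - 1) * h$i + ((\<alpha> - 1) * norm y powr ((\<alpha> - 1) - 2) * (y \<bullet> h)) * y$i))) (at y)"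
    by (intro has_derivative_mult_right has_derivative_mult norm_powr_has_derivative[OF y0] li)
  then have d: "(Gf \<alpha> i has_derivative
      (\<lambda>h. (1 + \<alpha>) * (norm y powr (\<alpha> - 1) * h$i + ((\<alpha> - 1) * norm y powr ((\<alpha> - 1) - 2) * (y \<bullet> h)) * y$i))) (at y)"
    by (rule has_derivative_transform_within_open[where s="ball 0 1"])
      (use True in \<open>auto simp: Gf_def\<close>)
  have "hess_alpha \<alpha> i j y = (1 + \<alpha>) * (norm y powr (\<alpha> - 1) * (axis j 1 :: real^'n)$i + ((\<alpha> - 1) * norm y powr ((\<alpha> - 1) - 2) * (y \<bullet> axis j 1)) * y$i)" for j
  proof -
    have e: "(\<alpha> - 1) - 2 = \<alpha> - 3" by simp
    show ?thesis using True unfolding hess_alpha_def e inner_axis1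
      by (simp add: axis_def algebra_simps)
  qed
  then show ?thesis using d by (intro exI[of _ "(\<lambda>h. (1 + \<alpha>) * (norm y powr (\<alpha> - 1) * h$i + ((\<alpha> - 1) * norm y powr ((\<alpha> - 1) - 2) * (y \<bullet> h)) * y$i))"]) auto
next
  case False
  then have y1: "norm y > 1" using assms by simp
  have li: "((\<lambda>x::real^'n. (1 + \<alpha>) * x$i) has_derivative (\<lambda>h. (1 + \<alpha>) * h$i)) (at y)"
    by (intro has_derivative_mult_right bounded_linear_imp_has_derivative bounded_linear_vec_nth)
  have d: "(Gf \<alpha> i has_derivative (\<lambda>h. (1 + \<alpha>) * h$i)) (at y)"
  proof (rule has_derivative_transform_within_open[OF li, where s="- cball 0 1"])
    show "open (- cball (0::real^'n) 1)" by auto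
    show "y \<in> - cball 0 1" using y1 by simp
    fix x :: "real^'n" assume "x \<in> - cball 0 1"
    then show "(1 + \<alpha>) * x$i = Gf \<alpha> i x" by (simp add: Gf_def)
  qed
  have "hess_alpha \<alpha> i j y = (1 + \<alpha>) * (axis j 1 :: real^'n)$i" for j
    using False unfolding hess_alpha_def by (simp add: axis_def)
  then show ?thesis using d by (intro exI[of _ "\<lambda>h. (1 + \<alpha>) * h$i"]) auto
qed

lemma vec_nth_measurable[measurable]: "(\<lambda>x::real^'n::finite. x $ i) \<in> borel_measurable borel"
  by (rule borel_measurable_continuous_onI) (intro continuous_intros)

lemma f_alpha_continuous:
  assumes "\<alpha> \<ge> 0"
  shows "continuous_on UNIV (f_alpha \<alpha> :: real^'n::finite \<Rightarrow> real)"
proof -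
  have "continuous_on (cball 0 1 \<union> {x::real^'n. 1 \<le> norm x})
      (\<lambda>x. if norm x \<le> 1 then norm x powr (1 + \<alpha>) + (\<alpha> - 1) / 2 else (1 + \<alpha>) / 2 * (norm x)\<^sup>2)"
  proof (rule continuous_on_cases)
    show "closed (cball (0::real^'n) 1)" by simp
    show "closed {x::real^'n. 1 \<le> norm x}" by (intro closed_Collect_le continuous_intros)
    show "continuous_on (cball 0 1) (\<lambda>x::real^'n. norm x powr (1 + \<alpha>) + (\<alpha> - 1) / 2)"
      using assms by (intro continuous_intros continuous_on_powr') auto
    show "continuous_on {x::real^'n. 1 \<le> norm x} (\<lambda>x. (1 + \<alpha>) / 2 * (norm x)\<^sup>2)"
      by (intro continuous_intros)
    show "\<forall>x. x \<in> cball 0 1 \<and> \<not> norm x \<le> 1 \<or> x \<in> {x. 1 \<le> norm x} \<and> norm x \<le> 1 \<longrightarrow>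
        norm x powr (1 + \<alpha>) + (\<alpha> - 1) / 2 = (1 + \<alpha>) / 2 * (norm x)\<^sup>2"
      by (auto simp: field_simps)
  qed
  moreover have "cball 0 1 \<union> {x::real^'n. 1 \<le> norm x} = UNIV" by auto
  ultimately show ?thesis unfolding f_alpha_def[abs_def] by simp
qed

lemma Gf_isCont:
  fixes y :: "real^'n::finite"
  assumes "y \<noteq> 0"
  shows "isCont (Gf \<alpha> i) y"
proof -
  have m: "min (norm y) 1 \<noteq> 0" using assms by (simp add: min_def)
  have c1: "((\<lambda>x::real^'n. min (norm x) 1) \<longlongrightarrow> min (norm y) 1) (at y)"
    by (intro tendsto_min tendsto_norm tendsto_ident_at tendsto_const)
  have c2: "((\<lambda>x::real^'n. min (norm x) 1 powr (\<alpha> - 1)) \<longlongrightarrow> min (norm y) 1 powr (\<alpha> - 1)) (at y)"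
    by (rule tendsto_powr[OF c1 tendsto_const m])
  have c3: "((\<lambda>x::real^'n. x $ i) \<longlongrightarrow> y $ i) (at y)"
    by (intro tendsto_vec_nth tendsto_ident_at)
  have "((\<lambda>x::real^'n. (1 + \<alpha>) * min (norm x) 1 powr (\<alpha> - 1) * x$i) \<longlongrightarrow> (1 + \<alpha>) * min (norm y) 1 powr (\<alpha> - 1) * y$i) (at y)"
    by (intro tendsto_mult c2 c3 tendsto_const)
  then show ?thesis unfolding isCont_def Gf_def .
qed

lemma Gf_abs_le:
  fixes x :: "real^'n::finite"
  assumes "\<alpha> \<ge> 0" "norm x < 1"
  shows "\<bar>Gf \<alpha> i x\<bar> \<le> (1 + \<alpha>) * norm x powr \<alpha>"
proof (cases "x = 0")
  case True
  then show ?thesis by (simp add: Gf_def)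
next
  case False
  define r where "r = norm x"
  have r: "0 < r" "r < 1" using False assms unfolding r_def by auto
  have "\<bar>Gf \<alpha> i x\<bar> = (1 + \<alpha>) * r powr (\<alpha> - 1) * \<bar>x$i\<bar>"
    using r assms unfolding Gf_def r_def by (simp add: abs_mult)
  also have "\<dots> \<le> (1 + \<alpha>) * r powr (\<alpha> - 1) * r"
    unfolding r_def using assms by (intro mult_left_mono component_le_norm_cart) auto
  also have "\<dots> = (1 + \<alpha>) * r powr \<alpha>" using powr_m1[OF r(1), of \<alpha>] r by simp
  finally show ?thesis unfolding r_def .
qed

lemma Gf_isCont0:
  assumes "\<alpha> > 0"
  shows "isCont (Gf \<alpha> i :: real^'n::finite \<Rightarrow> real) 0"
proof -
  have t1: "((\<lambda>x::real^'n. norm x) \<longlongrightarrow> 0) (at 0)"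
    by (rule tendsto_norm_zero[OF tendsto_ident_at])
  have t2: "((\<lambda>x::real^'n. norm x powr \<alpha>) \<longlongrightarrow> 0) (at 0)"
    by (rule tendsto_zero_powrI[OF t1 tendsto_const]) (simp_all add: assms)
  have t3: "((\<lambda>x::real^'n. (1 + \<alpha>) * norm x powr \<alpha>) \<longlongrightarrow> 0) (at 0)"
    using tendsto_mult[OF tendsto_const[of "1 + \<alpha>"] t2] by simp
  have ev: "\<forall>\<^sub>F x in at (0::real^'n). norm (Gf \<alpha> i x) \<le> (1 + \<alpha>) * norm x powr \<alpha>"
  proof -
    have "\<forall>x::real^'n. x \<noteq> 0 \<and> dist x 0 < 1 \<longrightarrow> norm (Gf \<alpha> i x) \<le> (1 + \<alpha>) * norm x powr \<alpha>"
      using Gf_abs_le[of \<alpha> _ i] assms by simp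
    then show ?thesis unfolding eventually_at by (intro exI[of _ 1]) simp
  qed
  have "(Gf \<alpha> i \<longlongrightarrow> 0) (at (0::real^'n))"
    by (rule Lim_null_comparison[OF ev t3])
  moreover have "Gf \<alpha> i (0::real^'n) = 0" by (simp add: Gf_def)
  ultimately show ?thesis unfolding isCont_def by simp
qed

lemma Gf_abs_le_global:
  fixes x :: "real^'n::finite"
  assumes "\<alpha> \<ge> 0"
  shows "\<bar>Gf \<alpha> i x\<bar> \<le> (1 + \<alpha>) * (1 + norm x)"
proof (cases "norm x < 1")
  case True
  have "\<bar>Gf \<alpha> i x\<bar> \<le> (1 + \<alpha>) * norm x powr \<alpha>" using Gf_abs_le[OF assms True] .
  also have "\<dots> \<le> (1 + \<alpha>) * 1"
    using assms True powr_mono2[of \<alpha> "norm x" 1] by (intro mult_left_mono) auto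
  also have "\<dots> \<le> (1 + \<alpha>) * (1 + norm x)" using assms by (intro mult_left_mono) auto
  finally show ?thesis .
next
  case False
  then have m: "min (norm x) 1 = 1" by simp
  have "\<bar>Gf \<alpha> i x\<bar> = (1 + \<alpha>) * \<bar>x$i\<bar>" unfolding Gf_def m using assms by (simp add: abs_mult)
  also have "\<dots> \<le> (1 + \<alpha>) * (1 + norm x)"
    using assms component_le_norm_cart[of x i] by (intro mult_left_mono) auto
  finally show ?thesis .
qed

lemma f_alpha_measurable: "\<alpha> \<ge> 0 \<Longrightarrow> (f_alpha \<alpha> :: real^'n::finite \<Rightarrow> real) \<in> borel_measurable lborel"
  using borel_measurable_continuous_onI[OF f_alpha_continuous] by simp

lemma Gf_measurable: "(Gf \<alpha> i :: real^'n::finite \<Rightarrow> real) \<in> borel_measurable lborel"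
proof -
  have "continuous_on (- {0}) (Gf \<alpha> i :: real^'n \<Rightarrow> real)"
    by (intro continuous_at_imp_continuous_on ballI Gf_isCont) auto
  then show ?thesis using borel_measurable_continuous_countable_exceptions[of "{0}"] by simp
qed

lemma hess_measurable: "(hess_alpha \<alpha> i j :: real^'n::finite \<Rightarrow> real) \<in> borel_measurable lborel"
  unfolding hess_alpha_def[abs_def] by measurable

lemma locally_Lp_of_bound:
  fixes g :: "real^'n::finite \<Rightarrow> real"
  assumes g: "g \<in> borel_measurable lborel" and s: "0 \<le> s" "s < real CARD('n)"
    and B: "\<And>K. compact K \<Longrightarrow> \<exists>M. \<forall>x\<in>K. \<bar>g x\<bar> powr q \<le> M * (indicator (cball 0 1) x * norm x powr (-s) + 1)"
  shows "locally_Lp q g"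
  unfolding locally_Lp_def
proof (intro conjI allI impI g)
  fix K :: "(real^'n) set" assume K: "compact K"
  obtain M where M: "\<And>x. x \<in> K \<Longrightarrow> \<bar>g x\<bar> powr q \<le> M * (indicator (cball 0 1) x * norm x powr (-s) + 1)"
    using B[OF K] by blast
  have Ks[measurable]: "K \<in> sets lborel" using K by (simp add: borel_compact)
  define b where "b x = \<bar>M\<bar> * (indicator (cball 0 1) x * norm x powr (-s)) + \<bar>M\<bar> * (indicator K x *\<^sub>R 1)" for x :: "real^'n"
  have ib: "integrable lborel b"
    unfolding b_def
    using singular_integrable[OF s] borel_integrable_compact[OF K continuous_on_const[of K "1::real"]]
    by simp
  show "set_integrable lborel K (\<lambda>x. \<bar>g x\<bar> powr q)"
    unfolding set_integrable_def
  proof (rule Bochner_Integration.integrable_bound[OF ib])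
    show "(\<lambda>x. indicator K x *\<^sub>R \<bar>g x\<bar> powr q) \<in> borel_measurable lborel" using g by measurable
    show "AE x in lborel. norm (indicator K x *\<^sub>R \<bar>g x\<bar> powr q) \<le> norm (b x)"
    proof (rule AE_I2)
      fix x
      have b0: "0 \<le> b x" unfolding b_def by (auto intro!: add_nonneg_nonneg mult_nonneg_nonneg)
      show "norm (indicator K x *\<^sub>R \<bar>g x\<bar> powr q) \<le> norm (b x)"
      proof (cases "x \<in> K")
        case True
        have "\<bar>g x\<bar> powr q \<le> M * (indicator (cball 0 1) x * norm x powr (-s) + 1)" using M[OF True] .
        also have "\<dots> \<le> \<bar>M\<bar> * (indicator (cball 0 1) x * norm x powr (-s) + 1)"
          by (intro mult_right_mono) (auto intro!: add_nonneg_nonneg)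
        also have "\<dots> = b x" using True unfolding b_def by (simp add: algebra_simps)
        finally show ?thesis using True b0 by simp
      next
        case False
        then show ?thesis using b0 by simp
      qed
    qed
  qed
qed

lemma f_locally_Lp:
  assumes "\<alpha> \<ge> 0" "q > 0"
  shows "locally_Lp q (f_alpha \<alpha> :: real^'n::finite \<Rightarrow> real)"
  unfolding locally_Lp_def
proof (intro conjI allI impI)
  show "(f_alpha \<alpha> :: real^'n \<Rightarrow> real) \<in> borel_measurable lborel" using f_alpha_measurable[OF assms(1)] .
  fix K :: "(real^'n) set" assume K: "compact K"
  have "continuous_on K (\<lambda>x. \<bar>f_alpha \<alpha> x\<bar> powr q)"
    using continuous_on_subset[OF f_alpha_continuous[OF assms(1)]] assms(2)
    by (intro continuous_on_powr' continuous_intros) auto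
  then show "set_integrable lborel K (\<lambda>x. \<bar>f_alpha \<alpha> x\<bar> powr q)"
    unfolding set_integrable_def by (rule borel_integrable_compact[OF K])
qed

lemma Gf_locally_Lp:
  assumes "\<alpha> \<ge> 0" "q > 0"
  shows "locally_Lp q (Gf \<alpha> i :: real^'n::finite \<Rightarrow> real)"
proof (rule locally_Lp_of_bound[where s=0])
  show "(Gf \<alpha> i :: real^'n \<Rightarrow> real) \<in> borel_measurable lborel" by (rule Gf_measurable)
  show "0 \<le> (0::real)" by simp
  show "0 < real CARD('n)" by simp
  fix K :: "(real^'n) set" assume K: "compact K"
  then obtain R where R: "\<And>x. x \<in> K \<Longrightarrow> norm x \<le> R"
    using compact_imp_bounded bounded_iff by metis
  define M where "M = ((1 + \<alpha>) * (1 + \<bar>R\<bar>)) powr q"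
  have M0: "0 \<le> M" unfolding M_def by simp
  have "\<bar>Gf \<alpha> i x\<bar> powr q \<le> M * (indicator (cball 0 1) x * norm x powr (- 0) + 1)" if "x \<in> K" for x
  proof -
    have "\<bar>Gf \<alpha> i x\<bar> \<le> (1 + \<alpha>) * (1 + \<bar>R\<bar>)"
    proof -
      have "\<bar>Gf \<alpha> i x\<bar> \<le> (1 + \<alpha>) * (1 + norm x)" by (rule Gf_abs_le_global[OF assms(1)])
      also have "\<dots> \<le> (1 + \<alpha>) * (1 + \<bar>R\<bar>)"
        using R[OF that] assms(1) by (intro mult_left_mono) auto
      finally show ?thesis .
    qed
    then have "\<bar>Gf \<alpha> i x\<bar> powr q \<le> M" unfolding M_def using assms(2)
      by (intro powr_mono2) auto
    also have "\<dots> \<le> M * (indicator (cball 0 1) x * norm x powr (- 0) + 1)"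
      using M0 by (simp add: indicator_def)
    finally show ?thesis .
  qed
  then show "\<exists>M. \<forall>x\<in>K. \<bar>Gf \<alpha> i x\<bar> powr q \<le> M * (indicator (cball 0 1) x * norm x powr (- 0) + 1)"
    by blast
qed

lemma hess_abs_le:
  fixes x :: "real^'n::finite"
  assumes "\<alpha> \<ge> 0" "0 < norm x" "norm x < 1"
  shows "\<bar>hess_alpha \<alpha> i j x\<bar> \<le> (1 + \<alpha>) * (1 + \<bar>\<alpha> - 1\<bar>) * norm x powr (\<alpha> - 1)"
proof -
  define r where "r = norm x"
  have r: "0 < r" "r < 1" using assms unfolding r_def by auto
  have xij: "\<bar>x$i * x$j\<bar> \<le> r powr 2"
  proof -
    have "\<bar>x$i * x$j\<bar> = \<bar>x$i\<bar> * \<bar>x$j\<bar>" by (simp add: abs_mult)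
    also have "\<dots> \<le> r * r" unfolding r_def
      by (intro mult_mono component_le_norm_cart) auto
    also have "\<dots> = r powr 2" using r by (simp add: powr_numeral power2_eq_square)
    finally show ?thesis .
  qed
  have e: "r powr (\<alpha> - 3) * r powr 2 = r powr (\<alpha> - 1)"
  proof -
    have "r powr (\<alpha> - 3) * r powr 2 = r powr ((\<alpha> - 3) + 2)" by (rule powr_add[symmetric])
    also have "(\<alpha> - 3) + 2 = \<alpha> - 1" by simp
    finally show ?thesis .
  qed
  have "\<bar>hess_alpha \<alpha> i j x\<bar> = (1 + \<alpha>) * \<bar>r powr (\<alpha> - 1) * (if i = j then 1 else 0) + (\<alpha> - 1) * r powr (\<alpha> - 3) * (x$i * x$j)\<bar>"
    using assms unfolding hess_alpha_def r_def by (simp add: abs_mult)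
  also have "\<dots> \<le> (1 + \<alpha>) * (r powr (\<alpha> - 1) + \<bar>\<alpha> - 1\<bar> * (r powr (\<alpha> - 3) * r powr 2))"
  proof (intro mult_left_mono)
    have "\<bar>r powr (\<alpha> - 1) * (if i = j then 1 else 0)\<bar> \<le> r powr (\<alpha> - 1)" by simp
    moreover have "\<bar>(\<alpha> - 1) * r powr (\<alpha> - 3) * (x$i * x$j)\<bar> \<le> \<bar>\<alpha> - 1\<bar> * (r powr (\<alpha> - 3) * r powr 2)"
    proof -
      have "\<bar>(\<alpha> - 1) * r powr (\<alpha> - 3) * (x$i * x$j)\<bar> = \<bar>\<alpha> - 1\<bar> * (r powr (\<alpha> - 3) * \<bar>x$i * x$j\<bar>)"
        by (simp add: abs_mult)
      also have "\<dots> \<le> \<bar>\<alpha> - 1\<bar> * (r powr (\<alpha> - 3) * r powr 2)"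
        using xij by (intro mult_left_mono) auto
      finally show ?thesis .
    qed
    ultimately show "\<bar>r powr (\<alpha> - 1) * (if i = j then 1 else 0) + (\<alpha> - 1) * r powr (\<alpha> - 3) * (x$i * x$j)\<bar>
        \<le> r powr (\<alpha> - 1) + \<bar>\<alpha> - 1\<bar> * (r powr (\<alpha> - 3) * r powr 2)"
      by (smt (verit))
  qed (use assms in auto)
  also have "\<dots> = (1 + \<alpha>) * (1 + \<bar>\<alpha> - 1\<bar>) * r powr (\<alpha> - 1)"
    unfolding e by (simp add: algebra_simps)
  finally show ?thesis unfolding r_def .
qed

lemma hess_locally_Lp:
  assumes a: "\<alpha> \<ge> 0" and q: "q > 0" and sq: "(1 - \<alpha>) * q < real CARD('n::finite)"
  shows "locally_Lp q (hess_alpha \<alpha> i j :: real^'n \<Rightarrow> real)"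
proof -
  define s where "s = max 0 ((1 - \<alpha>) * q)"
  define C where "C = (1 + \<alpha>) * (1 + \<bar>\<alpha> - 1\<bar>)"
  define M where "M = C powr q"
  have C1: "1 + \<alpha> \<le> C" unfolding C_def using a by (simp add: algebra_simps)
  have M0: "0 \<le> M" unfolding M_def by simp
  have s: "0 \<le> s" "s < real CARD('n)" unfolding s_def using sq by auto
  have bound: "\<bar>hess_alpha \<alpha> i j x\<bar> powr q \<le> M * (indicator (cball 0 1) x * norm x powr (-s) + 1)" for x :: "real^'n"
  proof -
    have R0: "0 \<le> M * (indicator (cball 0 1) x * norm x powr (-s) + 1)"
      using M0 by (intro mult_nonneg_nonneg add_nonneg_nonneg) auto
    consider "x = 0" | "0 < norm x" "norm x < 1" | "norm x \<ge> 1" by (cases "x = 0") (auto, linarith)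
    then show ?thesis
    proof cases
      case 1
      then have "hess_alpha \<alpha> i j x = 0" by (simp add: hess_alpha_def)
      then show ?thesis using R0 by simp
    next
      case 2
      define r where "r = norm x"
      have r: "0 < r" "r < 1" using 2 unfolding r_def by auto
      have "\<bar>hess_alpha \<alpha> i j x\<bar> powr q \<le> (C * r powr (\<alpha> - 1)) powr q"
        using hess_abs_le[OF a 2, of i j] q unfolding C_def r_def by (intro powr_mono2) auto
      also have "\<dots> = M * r powr ((\<alpha> - 1) * q)"
        unfolding M_def by (simp add: powr_mult powr_powr)
      also have "\<dots> \<le> M * r powr (-s)"
        using r M0 unfolding s_def by (intro mult_left_mono powr_mono') (auto simp: algebra_simps)
      also have "\<dots> \<le> M * (indicator (cball 0 1) x * norm x powr (-s) + 1)"
        using r M0 unfolding r_def by (intro mult_left_mono) auto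
      finally show ?thesis .
    next
      case 3
      then have "\<bar>hess_alpha \<alpha> i j x\<bar> \<le> C"
        using C1 a by (auto simp: hess_alpha_def)
      then have "\<bar>hess_alpha \<alpha> i j x\<bar> powr q \<le> M"
        unfolding M_def using q by (intro powr_mono2) auto
      also have "\<dots> \<le> M * (indicator (cball 0 1) x * norm x powr (-s) + 1)"
      proof -
        have "1 \<le> indicator (cball 0 1) x * norm x powr (-s) + 1" by (simp add: indicator_def)
        from mult_left_mono[OF this M0] show ?thesis by simp
      qed
      finally show ?thesis .
    qed
  qed
  show ?thesis
    by (rule locally_Lp_of_bound[OF hess_measurable s]) (use bound in blast)
qed

theorem lemma2p6:
  fixes p \<alpha> :: real
  assumes "p \<ge> 1" and "\<alpha> \<ge> 0"
    and "(p < real CARD('n::finite)) \<or> (p \<ge> real CARD('n) \<and> \<alpha> > (p - real CARD('n)) / p)"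
  shows "W2p_loc p (f_alpha \<alpha> :: real^'n \<Rightarrow> real)
    \<and> (\<forall>H :: 'n \<Rightarrow> 'n \<Rightarrow> real^'n \<Rightarrow> real.
          (\<forall>i j. locally_Lp 1 (H i j) \<and> weak_second i j (f_alpha \<alpha>) (H i j)) \<longrightarrow>
          (AE x in lborel. \<forall>i j. H i j x = hess_alpha \<alpha> i j x))
    \<and> (\<forall>x :: real^'n. norm x \<noteq> 0 \<and> norm x \<noteq> 1 \<longrightarrow>
          (\<forall>i j. cpartial j (cpartial i (f_alpha \<alpha>)) x = hess_alpha \<alpha> i j x))"
proof -
  note p1 = assms(1) and a0 = assms(2) and cond = assms(3)
  define n where "n = real CARD('n)"
  have n1: "1 \<le> n" unfolding n_def by simp
  have p0: "0 < p" using p1 by simp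
  have sp: "(1 - \<alpha>) * p < n"
    using cond
  proof
    assume "p < real CARD('n)"
    moreover have "(1 - \<alpha>) * p \<le> p" using a0 p0 by (simp add: algebra_simps)
    ultimately show ?thesis unfolding n_def by simp
  next
    assume "p \<ge> real CARD('n) \<and> \<alpha> > (p - real CARD('n)) / p"
    then have "(p - n) / p < \<alpha>" unfolding n_def by simp
    then have "p - n < \<alpha> * p" using p0 by (simp add: divide_less_eq)
    then show ?thesis by (simp add: algebra_simps)
  qed
  have s1: "(1 - \<alpha>) * 1 < n"
  proof (cases "\<alpha> \<ge> 1")
    case True then show ?thesis using n1 by simp
  next
    case False
    then have "(1 - \<alpha>) * 1 \<le> (1 - \<alpha>) * p" using p1 by (intro mult_left_mono) auto
    then show ?thesis using sp by simp
  qed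
  have c0: "isCont (Gf \<alpha> i :: real^'n \<Rightarrow> real) 0 \<or> CARD('n) \<ge> 2" for i
  proof (cases "CARD('n) \<ge> 2")
    case True then show ?thesis by simp
  next
    case False
    moreover have "0 < CARD('n)" by simp
    ultimately have "CARD('n) = 1" by linarith
    then have "\<not> p < real CARD('n)" using p1 by simp
    then have "\<alpha> > (p - 1) / p" using cond \<open>CARD('n) = 1\<close> by simp
    moreover have "(p - 1) / p \<ge> 0" using p1 by simp
    ultimately have "\<alpha> > 0" by linarith
    then show ?thesis using Gf_isCont0 by blast
  qed
  have LF: "locally_Lp 1 (f_alpha \<alpha> :: real^'n \<Rightarrow> real)" using f_locally_Lp[OF a0 zero_less_one] .
  have LG: "locally_Lp q (Gf \<alpha> i :: real^'n \<Rightarrow> real)" if "q > 0" for i q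
    using Gf_locally_Lp[OF a0 that] .
  have LH1: "locally_Lp 1 (hess_alpha \<alpha> i j :: real^'n \<Rightarrow> real)" for i j
    using hess_locally_Lp[OF a0 _ s1[unfolded n_def]] by simp
  have LHp: "locally_Lp p (hess_alpha \<alpha> i j :: real^'n \<Rightarrow> real)" for i j
    using hess_locally_Lp[OF a0 p0 sp[unfolded n_def]] .
  have fc: "isCont (f_alpha \<alpha> :: real^'n \<Rightarrow> real) y" for y
    using f_alpha_continuous[OF a0] continuous_on_eq_continuous_at[OF open_UNIV] by blast
  have wp1: "weak_partial i (f_alpha \<alpha> :: real^'n \<Rightarrow> real) (Gf \<alpha> i)" for i
  proof (rule weak_partial_from_classical[OF LF LG])
    show "isCont (f_alpha \<alpha>) (0::real^'n) \<or> 2 \<le> CARD('n)" using fc by simp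
    fix y :: "real^'n" assume y: "norm y \<noteq> 0" "norm y \<noteq> 1"
    show "\<exists>F'. (f_alpha \<alpha> has_derivative F') (at y) \<and> F' (axis i 1) = Gf \<alpha> i y"
      using f_alpha_has_derivative[OF y, of \<alpha>] by (intro exI) (auto simp: Gf_def inner_axis1)
  qed (use fc in auto)
  have wp2: "weak_partial j (Gf \<alpha> i :: real^'n \<Rightarrow> real) (hess_alpha \<alpha> i j)" for i j
  proof (rule weak_partial_from_classical[OF LG[of 1] LH1])
    show "isCont (Gf \<alpha> i) (0::real^'n) \<or> 2 \<le> CARD('n)" using c0 by simp
    fix y :: "real^'n" assume y: "norm y \<noteq> 0" "norm y \<noteq> 1"
    show "\<exists>F'. (Gf \<alpha> i has_derivative F') (at y) \<and> F' (axis j 1) = hess_alpha \<alpha> i j y"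
      using Gf_has_derivative[OF y, of \<alpha> i] by blast
  qed (auto intro: Gf_isCont)
  have part1: "W2p_loc p (f_alpha \<alpha> :: real^'n \<Rightarrow> real)"
    unfolding W2p_loc_def
  proof (intro conjI exI allI)
    show "locally_Lp p (f_alpha \<alpha> :: real^'n \<Rightarrow> real)" using f_locally_Lp[OF a0 p0] .
    fix i j :: 'n
    show "locally_Lp p (Gf \<alpha> i :: real^'n \<Rightarrow> real)" using LG[OF p0] .
    show "weak_partial i (f_alpha \<alpha> :: real^'n \<Rightarrow> real) (Gf \<alpha> i)" using wp1 .
    show "locally_Lp p (hess_alpha \<alpha> i j :: real^'n \<Rightarrow> real)" using LHp .
    show "weak_partial j (Gf \<alpha> i :: real^'n \<Rightarrow> real) (hess_alpha \<alpha> i j)" using wp2 .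
  qed
  have part2: "AE x in lborel. \<forall>i j. H i j x = hess_alpha \<alpha> i j x"
    if H: "\<forall>i j. locally_Lp 1 (H i j) \<and> weak_second i j (f_alpha \<alpha>) (H i j)"
    for H :: "'n \<Rightarrow> 'n \<Rightarrow> real^'n \<Rightarrow> real"
  proof -
    have ae: "AE x in lborel. H i j x - hess_alpha \<alpha> i j x = 0" for i j
    proof (rule fundamental_lemma)
      have LHH: "locally_Lp 1 (H i j)" using H by blast
      show "(\<lambda>x. H i j x - hess_alpha \<alpha> i j x) \<in> borel_measurable lborel"
        using locally_Lp_1_D(1)[OF LHH] locally_Lp_1_D(1)[OF LH1[of i j]] by measurable
      show "set_integrable lborel K (\<lambda>x. H i j x - hess_alpha \<alpha> i j x)" if "compact K" for K
        using locally_Lp_1_D(2)[OF LHH that] locally_Lp_1_D(2)[OF LH1[of i j] that]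
        by (rule set_integral_diff)
      fix \<phi> :: "real^'n \<Rightarrow> real" assume \<phi>: "test_fn \<phi>"
      have i1: "integrable lborel (\<lambda>x. H i j x * \<phi> x)" using test_fn_integrable(1)[OF \<phi> LHH] .
      have i2: "integrable lborel (\<lambda>x. hess_alpha \<alpha> i j x * \<phi> x)" using test_fn_integrable(1)[OF \<phi> LH1] .
      have "(\<integral>x. H i j x * \<phi> x \<partial>lborel) = (\<integral>x. f_alpha \<alpha> x * cpartial i (cpartial j \<phi>) x \<partial>lborel)"
        using H \<phi> unfolding weak_second_def by simp
      also have "\<dots> = - (\<integral>x. Gf \<alpha> i x * cpartial j \<phi> x \<partial>lborel)"
        using wp1[of i] test_fn_cpartial[OF \<phi>, of j] unfolding weak_partial_def by blast
      also have "(\<integral>x. Gf \<alpha> i x * cpartial j \<phi> x \<partial>lborel) = - (\<integral>x. hess_alpha \<alpha> i j x * \<phi> x \<partial>lborel)"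
        using wp2[of j i] \<phi> unfolding weak_partial_def by blast
      finally have eq: "(\<integral>x. H i j x * \<phi> x \<partial>lborel) = (\<integral>x. hess_alpha \<alpha> i j x * \<phi> x \<partial>lborel)" by simp
      have "(\<integral>x. (H i j x - hess_alpha \<alpha> i j x) * \<phi> x \<partial>lborel)
          = (\<integral>x. H i j x * \<phi> x - hess_alpha \<alpha> i j x * \<phi> x \<partial>lborel)"
        by (simp add: algebra_simps)
      also have "\<dots> = (\<integral>x. H i j x * \<phi> x \<partial>lborel) - (\<integral>x. hess_alpha \<alpha> i j x * \<phi> x \<partial>lborel)"
        by (rule Bochner_Integration.integral_diff[OF i1 i2])
      finally show "(\<integral>x. (H i j x - hess_alpha \<alpha> i j x) * \<phi> x \<partial>lborel) = 0" using eq by simp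
    qed
    have "AE x in lborel. \<forall>i\<in>UNIV. \<forall>j\<in>UNIV. H i j x - hess_alpha \<alpha> i j x = 0"
    proof (subst AE_ball_countable)
      show "countable (UNIV :: 'n set)" by (rule countable_finite) simp
      show "\<forall>i\<in>UNIV. AE x in lborel. \<forall>j\<in>UNIV. H i j x - hess_alpha \<alpha> i j x = 0"
      proof
        fix i :: 'n
        show "AE x in lborel. \<forall>j\<in>UNIV. H i j x - hess_alpha \<alpha> i j x = 0"
        proof (subst AE_ball_countable)
          show "countable (UNIV :: 'n set)" by (rule countable_finite) simp
          show "\<forall>j\<in>UNIV. AE x in lborel. H i j x - hess_alpha \<alpha> i j x = 0" using ae by blast
        qed
      qed
    qed
    then show ?thesis by (rule AE_mp) (intro AE_I2, auto)
  qed
  have part3: "cpartial j (cpartial i (f_alpha \<alpha>)) x = hess_alpha \<alpha> i j x"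
    if x: "norm x \<noteq> 0" "norm x \<noteq> 1" for x :: "real^'n" and i j
  proof -
    obtain G' where G': "(Gf \<alpha> i has_derivative G') (at x)" "\<And>j. G' (axis j 1) = hess_alpha \<alpha> i j x"
      using Gf_has_derivative[OF x, of \<alpha> i] by blast
    define U where "U = {y::real^'n. norm y \<noteq> 0} \<inter> {y. norm y \<noteq> 1}"
    have oU: "open U" unfolding U_def
      by (intro open_Int open_Collect_neq continuous_intros)
    have "(cpartial i (f_alpha \<alpha>) has_derivative G') (at x)"
    proof (rule has_derivative_transform_within_open[OF G'(1) oU])
      show "x \<in> U" using x unfolding U_def by simp
      fix y assume "y \<in> U"
      then show "Gf \<alpha> i y = cpartial i (f_alpha \<alpha>) y"
        unfolding U_def using cpartial_f_alpha[of y i \<alpha>] by simp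
    qed
    then have "frechet_derivative (cpartial i (f_alpha \<alpha>)) (at x) = G'"
      using frechet_derivative_at by metis
    then show ?thesis unfolding cpartial_def[of j] using G'(2) by simp
  qed
  show ?thesis using part1 part2 part3 by blast
qed

end
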